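(* Let $\alpha\in[0,\infty)$. Let $L$ be the event that $\mathscr{G}(n,\alpha/n)$ contains no cycles and, for $r>0$, let $B_r$ be the event that $\mathscr{G}(n,\alpha/n)$ has no connected component with more than $r$ vertices. Then \[ \lim_{r\to\infty}\liminf_{n\to\infty}P_{n,\alpha}(B_r)^{1/n}=\lim_{\epsilon\downarrow0}\limsup_{n\to\infty}P_{n,\alpha}(B_{\epsilon n})^{1/n}=\lim_{n\to\infty}P_{n,\alpha}(L)^{1/n}, \] all limits existing.
   Context: $\mathscr{G}(n,p)$ is the random graph on vertex set $\{1,\dots,n\}$ in which each of the $\binom n2$ unordered pairs is an edge independently with probability $p$; here $p=\alpha/n$, and $P_{n,\alpha}$ is the corresponding probability measure. *)

theory Defs
  imports "HOL-Analysis.Analysis"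
begin

text \<open>Simple graphs on vertex set {1..n} are represented by their edge sets:
  sets of 2-element subsets of {1..n}.\<close>

definition all_pairs :: "nat \<Rightarrow> nat set set" where
  "all_pairs n = {e. e \<subseteq> {1..n} \<and> card e = 2}"

definition Gnp_prob :: "nat \<Rightarrow> real \<Rightarrow> (nat set set \<Rightarrow> bool) \<Rightarrow> real" where
  "Gnp_prob n p Q =
     (\<Sum>E\<in>{E. E \<subseteq> all_pairs n \<and> Q E}.
        p ^ card E * (1 - p) ^ (card (all_pairs n) - card E))"

definition P_na :: "nat \<Rightarrow> real \<Rightarrow> (nat set set \<Rightarrow> bool) \<Rightarrow> real" where
  "P_na n \<alpha> Q = Gnp_prob n (\<alpha> / real n) Q"

definition has_cycle :: "nat set set \<Rightarrow> bool" where
  "has_cycle E \<longleftrightarrow> (\<exists>vs :: nat list. length vs \<ge> 3 \<and> distinct vs \<and>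
      (\<forall>i < length vs. {vs ! i, vs ! ((i + 1) mod length vs)} \<in> E))"

definition adj :: "nat set set \<Rightarrow> nat \<Rightarrow> nat \<Rightarrow> bool" where
  "adj E x y \<longleftrightarrow> {x, y} \<in> E"

definition component :: "nat \<Rightarrow> nat set set \<Rightarrow> nat \<Rightarrow> nat set" where
  "component n E v = {w \<in> {1..n}. (adj E)\<^sup>*\<^sup>* v w}"

definition event_L :: "nat set set \<Rightarrow> bool" where
  "event_L E \<longleftrightarrow> \<not> has_cycle E"

definition event_B :: "nat \<Rightarrow> real \<Rightarrow> nat set set \<Rightarrow> bool" where
  "event_B n r E \<longleftrightarrow> (\<forall>v \<in> {1..n}. real (card (component n E v)) \<le> r)"

end

theory Submission
  imports Defs
begin
definition pairs :: "nat set \<Rightarrow> nat set set" where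
  "pairs V = {e. e \<subseteq> V \<and> card e = 2}"

lemma all_pairs_eq: "all_pairs n = pairs {1..n}"
  by (simp add: all_pairs_def pairs_def)

lemma pairs_finite: "finite V \<Longrightarrow> finite (pairs V)"
  unfolding pairs_def by (rule finite_subset[of _ "Pow V"]) auto

lemma pairs_mono: "V \<subseteq> W \<Longrightarrow> pairs V \<subseteq> pairs W"
  unfolding pairs_def by auto

lemma card2_eq: "card e = 2 \<Longrightarrow> \<exists>a b. a \<noteq> b \<and> e = {a, b}"
  by (metis card_2_iff)

lemma pair_in_pairs: "{a, b} \<in> pairs V \<Longrightarrow> a \<in> V \<and> b \<in> V \<and> a \<noteq> b"
  unfolding pairs_def by (auto simp: card_2_iff doubleton_eq_iff)

lemma pairs_singleton: "pairs {v} = {}"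
proof -
  { fix e :: "nat set" assume "e \<subseteq> {v}" "card e = 2"
    then have False using card_mono[of "{v}" e] by simp }
  then show ?thesis unfolding pairs_def by blast
qed

lemma pairs_empty: "pairs {} = {}"
  unfolding pairs_def by auto

lemma has_cycle_mono: "has_cycle F \<Longrightarrow> F \<subseteq> F' \<Longrightarrow> has_cycle F'"
  unfolding has_cycle_def by blast

lemma no_cycle_empty: "\<not> has_cycle {}"
  unfolding has_cycle_def
proof clarify
  fix vs :: "nat list" assume "3 \<le> length vs" "\<forall>i<length vs. {vs ! i, vs ! ((i + 1) mod length vs)} \<in> {}"
  then show False by (metis empty_iff less_le_trans zero_less_numeral)
qed

lemma cycle_verts:
  assumes "F \<subseteq> pairs V" "length vs \<ge> 3"
    "\<forall>i < length vs. {vs ! i, vs ! ((i + 1) mod length vs)} \<in> F"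
  shows "set vs \<subseteq> V"
proof
  fix x assume "x \<in> set vs"
  then obtain i where i: "i < length vs" "vs ! i = x" by (auto simp: in_set_conv_nth)
  then have "{vs ! i, vs ! ((i + 1) mod length vs)} \<in> pairs V" using assms by blast
  then show "x \<in> V" using i pair_in_pairs by blast
qed

lemma leaf_exists:
  assumes fin: "finite X" and ne: "X \<noteq> {}" and FX: "F \<subseteq> pairs X" and nc: "\<not> has_cycle F"
  shows "\<exists>v\<in>X. \<forall>a b. {v, a} \<in> F \<and> {v, b} \<in> F \<longrightarrow> a = b"
proof -
  define PS where "PS = {vs. vs \<noteq> [] \<and> distinct vs \<and> set vs \<subseteq> X \<and>
      (\<forall>i. i + 1 < length vs \<longrightarrow> {vs ! i, vs ! (i + 1)} \<in> F)}"
  have "PS \<subseteq> {vs. set vs \<subseteq> X \<and> length vs \<le> card X}"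
  proof
    fix vs assume "vs \<in> PS"
    then have d: "distinct vs" and sv: "set vs \<subseteq> X" unfolding PS_def by auto
    have "length vs = card (set vs)" using distinct_card[OF d] by simp
    also have "\<dots> \<le> card X" using card_mono[OF fin sv] .
    finally show "vs \<in> {vs. set vs \<subseteq> X \<and> length vs \<le> card X}" using sv by simp
  qed
  then have finPS: "finite PS" using finite_lists_length_le[OF fin] finite_subset by blast
  obtain x where "x \<in> X" using ne by blast
  then have "[x] \<in> PS" unfolding PS_def by auto
  then have "PS \<noteq> {}" by blast
  have "Max (length ` PS) \<in> length ` PS" using finPS \<open>PS \<noteq> {}\<close> by simp
  then obtain vs where vs: "vs \<in> PS" and vlen: "length vs = Max (length ` PS)" by auto
  have vmax: "length ws \<le> length vs" if "ws \<in> PS" for ws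
    using that finPS vlen by simp
  define v where "v = vs ! 0"
  have vsne: "vs \<noteq> []" and dist: "distinct vs" and vsX: "set vs \<subseteq> X"
    and vsE: "\<And>i. i + 1 < length vs \<Longrightarrow> {vs ! i, vs ! (i + 1)} \<in> F"
    using vs unfolding PS_def by auto
  have vX: "v \<in> X" using vsne vsX v_def by (simp add: subset_iff)
  have nb: "w \<in> set vs" if "{v, w} \<in> F" for w
  proof (rule ccontr)
    assume wn: "w \<notin> set vs"
    have "w \<in> X" using that FX pair_in_pairs by blast
    have "w # vs \<in> PS" unfolding PS_def
    proof (intro CollectI conjI allI impI)
      fix i assume "i + 1 < length (w # vs)"
      show "{(w # vs) ! i, (w # vs) ! (i + 1)} \<in> F"
      proof (cases i)
        case 0 then show ?thesis using that v_def by (simp add: insert_commute)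
      next
        case (Suc k) then show ?thesis using vsE \<open>i + 1 < length (w # vs)\<close> by simp
      qed
    qed (use wn dist vsX \<open>w \<in> X\<close> in auto)
    then show False using vmax by fastforce
  qed
  show ?thesis
  proof (rule bexI[OF _ vX], intro allI impI, rule ccontr)
    fix a b assume ab: "{v, a} \<in> F \<and> {v, b} \<in> F" and "a \<noteq> b"
    obtain ja where ja: "ja < length vs" "vs ! ja = a" using nb ab by (metis in_set_conv_nth)
    obtain jb where jb: "jb < length vs" "vs ! jb = b" using nb ab by (metis in_set_conv_nth)
    have "v \<noteq> a" "v \<noteq> b" using ab FX pair_in_pairs by blast+
    then have "ja \<noteq> 0" "jb \<noteq> 0" "ja \<noteq> jb" using ja jb v_def \<open>a \<noteq> b\<close> by (metis, metis, metis)
    then have "ja \<ge> 2 \<or> jb \<ge> 2" by linarith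
    then obtain j where j: "j \<ge> 2" "j < length vs" "{v, vs ! j} \<in> F"
      using ja jb ab by auto
    define cs where "cs = take (j + 1) vs"
    have "has_cycle F" unfolding has_cycle_def
    proof (intro exI[of _ cs] conjI allI impI)
      show "3 \<le> length cs" using j cs_def by simp
      show "distinct cs" using dist cs_def by simp
      fix i assume i: "i < length cs"
      then have ij: "i \<le> j" using cs_def j by simp
      show "{cs ! i, cs ! ((i + 1) mod length cs)} \<in> F"
      proof (cases "i = j")
        case True
        then have "(i + 1) mod length cs = 0" using cs_def j by simp
        then show ?thesis using True j cs_def v_def by (simp add: insert_commute)
      next
        case False
        then have "(i + 1) mod length cs = i + 1" using cs_def j ij by simp
        then show ?thesis using vsE[of i] False ij j cs_def by simp
      qed
    qed
    then show False using nc by blast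
  qed
qed

lemma forest_card_less:
  assumes "finite X" "X \<noteq> {}" "F \<subseteq> pairs X" "\<not> has_cycle F"
  shows "card F < card X"
  using assms
proof (induction "card X" arbitrary: X F rule: less_induct)
  case less
  obtain v where vX: "v \<in> X" and leaf: "\<forall>a b. {v, a} \<in> F \<and> {v, b} \<in> F \<longrightarrow> a = b"
    using leaf_exists[OF less.prems] by blast
  define F' where "F' = {e \<in> F. v \<notin> e}"
  have F'sub: "F' \<subseteq> pairs (X - {v})" using less.prems(3) unfolding F'_def pairs_def by auto
  have nc': "\<not> has_cycle F'" using less.prems(4) has_cycle_mono F'_def by blast
  have finF: "finite F" using less.prems(1,3) pairs_finite finite_subset by blast
  have sub1: "{e \<in> F. v \<in> e} \<subseteq> {e. \<exists>a. e = {v, a} \<and> e \<in> F}"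
  proof
    fix e assume "e \<in> {e \<in> F. v \<in> e}"
    then have "e \<in> F" "v \<in> e" by auto
    then obtain a b where "a \<noteq> b" "e = {a, b}" using less.prems(3) card2_eq unfolding pairs_def by blast
    then show "e \<in> {e. \<exists>a. e = {v, a} \<and> e \<in> F}" using \<open>v \<in> e\<close> \<open>e \<in> F\<close> by (auto simp: insert_commute)
  qed
  have fin1: "finite {e. \<exists>a. e = {v, a} \<and> e \<in> F}"
      by (rule finite_subset[OF _ finF]) blast
  have c0: "card {e. \<exists>a. e = {v, a} \<and> e \<in> F} \<le> 1"
  proof -
    have fin: "finite {e. \<exists>a. e = {v, a} \<and> e \<in> F}"
      by (rule finite_subset[OF _ finF]) blast
    have "\<forall>x\<in>{e. \<exists>a. e = {v, a} \<and> e \<in> F}. \<forall>y\<in>{e. \<exists>a. e = {v, a} \<and> e \<in> F}. x = y"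
    proof (intro ballI)
      fix x y assume "x \<in> {e. \<exists>a. e = {v, a} \<and> e \<in> F}" "y \<in> {e. \<exists>a. e = {v, a} \<and> e \<in> F}"
      then obtain a b where "x = {v, a}" "x \<in> F" "y = {v, b}" "y \<in> F" by blast
      then show "x = y" using leaf by metis
    qed
    then show ?thesis unfolding One_nat_def card_le_Suc0_iff_eq[OF fin] .
  qed
  have c1: "card {e \<in> F. v \<in> e} \<le> 1"
    using card_mono[OF fin1 sub1] c0 by linarith
  have "F = F' \<union> {e \<in> F. v \<in> e}" unfolding F'_def by auto
  then have "card F \<le> card F' + card {e \<in> F. v \<in> e}"
    by (metis card_Un_le)
  then have cF: "card F \<le> card F' + 1" using c1 by linarith
  show ?case
  proof (cases "X - {v} = {}")
    case True
    then have "X = {v}" using vX by blast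
    then have "F = {}" using less.prems(3) pairs_singleton by auto
    then show ?thesis using \<open>X = {v}\<close> by simp
  next
    case False
    have lt: "card (X - {v}) < card X" using less.prems(1) vX by (rule card_Diff1_less)
    have "card F' < card (X - {v})"
      using less.hyps[OF lt _ False F'sub nc'] less.prems(1) by blast
    moreover have "card (X - {v}) = card X - 1" using vX by (rule card_Diff_singleton)
    ultimately show ?thesis using cF lt by linarith
  qed
qed

lemma forest_card_le:
  assumes "finite X" "F \<subseteq> pairs X" "\<not> has_cycle F"
  shows "card F \<le> card X"
proof (cases "X = {}")
  case True
  then have "F = {}" using assms(2) unfolding pairs_def by (auto dest: card2_eq)
  then show ?thesis by simp
next
  case False
  then show ?thesis using forest_card_less[OF assms(1) False assms(2,3)] by simp
qed

definition closedS :: "nat set set \<Rightarrow> nat set \<Rightarrow> bool" where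
  "closedS F S \<longleftrightarrow> (\<forall>e\<in>F. e \<subseteq> S \<or> e \<inter> S = {})"

definition reach :: "nat set set \<Rightarrow> nat \<Rightarrow> nat set" where
  "reach F v = {w. (adj F)\<^sup>*\<^sup>* v w}"

definition smallc :: "nat set \<Rightarrow> real \<Rightarrow> nat set set \<Rightarrow> bool" where
  "smallc V r F \<longleftrightarrow> (\<forall>v\<in>V. real (card (reach F v)) \<le> r)"

definition forests :: "nat set \<Rightarrow> real \<Rightarrow> nat set set set" where
  "forests V r = {F. F \<subseteq> pairs V \<and> \<not> has_cycle F \<and> smallc V r F}"

definition Gf :: "nat set \<Rightarrow> real \<Rightarrow> real \<Rightarrow> real" where
  "Gf V m r = (\<Sum>F\<in>forests V r. m ^ (card V - card F))"

lemma forests_finite: "finite V \<Longrightarrow> finite (forests V r)"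
  unfolding forests_def
  by (rule finite_subset[of _ "Pow (pairs V)"]) (auto simp: pairs_finite)

lemma Gf_nonneg: "m \<ge> 0 \<Longrightarrow> Gf V m r \<ge> 0"
  unfolding Gf_def by (intro sum_nonneg) auto

lemma pairs_nonempty: "e \<in> pairs V \<Longrightarrow> e \<noteq> {}"
  unfolding pairs_def by auto

lemma pairs_disj: "pairs S \<inter> pairs (V - S) = {}"
proof -
  { fix x :: "nat set" assume "x \<subseteq> S" "x \<subseteq> V - S" "card x = 2"
    then have "x = {}" by blast
    with \<open>card x = 2\<close> have False by simp }
  then show ?thesis unfolding pairs_def by blast
qed

lemma closed_compl: "F \<subseteq> pairs V \<Longrightarrow> closedS F S \<Longrightarrow> closedS F (V - S)"
  unfolding closedS_def pairs_def by blast

lemma closed_split: "F \<subseteq> pairs V \<Longrightarrow> closedS F S \<Longrightarrow> F = (F \<inter> pairs S) \<union> (F \<inter> pairs (V - S))"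
  unfolding closedS_def pairs_def by blast

lemma reach_in:
  assumes "F \<subseteq> pairs V" "v \<in> V" "(adj F)\<^sup>*\<^sup>* v w"
  shows "w \<in> V"
  using assms(3)
proof (induction rule: rtranclp_induct)
  case base then show ?case using assms(2) .
next
  case (step y z)
  then have "{y, z} \<in> pairs V" using assms(1) unfolding adj_def by blast
  then show ?case using pair_in_pairs by blast
qed

lemma reach_closed_sub:
  assumes "F \<subseteq> pairs V" "closedS F S" "v \<in> S" "(adj F)\<^sup>*\<^sup>* v w"
  shows "w \<in> S \<and> (adj (F \<inter> pairs S))\<^sup>*\<^sup>* v w"
  using assms(4)
proof (induction rule: rtranclp_induct)
  case base then show ?case using assms(3) by simp
next
  case (step y z)
  have yz: "{y, z} \<in> F" using step.hyps(2) unfolding adj_def by simp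
  have "{y, z} \<subseteq> S \<or> {y, z} \<inter> S = {}" using assms(2) yz unfolding closedS_def by (rule bspec)
  moreover have "y \<in> S" using step.IH by blast
  ultimately have "{y, z} \<subseteq> S" by blast
  moreover have "card {y, z} = 2" using yz assms(1) unfolding pairs_def by (simp add: subset_iff)
  ultimately have "{y, z} \<in> F \<inter> pairs S" using yz unfolding pairs_def by blast
  then have "adj (F \<inter> pairs S) y z" unfolding adj_def .
  then show ?case using step \<open>{y, z} \<subseteq> S\<close> by (meson insert_subset rtranclp.rtrancl_into_rtrancl)
qed

lemma adj_mono: "F \<subseteq> F' \<Longrightarrow> (adj F)\<^sup>*\<^sup>* v w \<Longrightarrow> (adj F')\<^sup>*\<^sup>* v w"
  by (rule rtranclp_mono[THEN predicate2D, rotated]) (auto simp: adj_def)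

lemma reach_closed:
  assumes "F \<subseteq> pairs V" "closedS F S" "v \<in> S"
  shows "reach F v = reach (F \<inter> pairs S) v"
  unfolding reach_def using reach_closed_sub[OF assms] adj_mono[of "F \<inter> pairs S" F] by blast

lemma smallc_split:
  assumes "F \<subseteq> pairs V" "closedS F S" "S \<subseteq> V"
  shows "smallc V r F \<longleftrightarrow> smallc S r (F \<inter> pairs S) \<and> smallc (V - S) r (F \<inter> pairs (V - S))"
proof -
  have "V = S \<union> (V - S)" using assms(3) by blast
  moreover have "reach F v = reach (F \<inter> pairs S) v" if "v \<in> S" for v
    using reach_closed[OF assms(1,2) that] .
  moreover have "reach F v = reach (F \<inter> pairs (V - S)) v" if "v \<in> V - S" for v
    using reach_closed[OF assms(1) closed_compl[OF assms(1,2)] that] .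
  ultimately show ?thesis unfolding smallc_def by (metis Un_iff)
qed

lemma cycle_in_closed:
  assumes FV: "F \<subseteq> pairs V" and cl: "closedS F S" and L: "length vs \<ge> 3"
    and E: "\<forall>i < length vs. {vs ! i, vs ! ((i + 1) mod length vs)} \<in> F"
    and d: "distinct vs" and v0: "vs ! 0 \<in> S"
  shows "has_cycle (F \<inter> pairs S)"
proof -
  have inS: "i < length vs \<Longrightarrow> vs ! i \<in> S" for i
  proof (induction i)
    case 0 then show ?case using v0 by simp
  next
    case (Suc i)
    then have "(i + 1) mod length vs = i + 1" by simp
    then have "{vs ! i, vs ! (i + 1)} \<in> F" using E Suc.prems by (metis Suc_lessD add.commute plus_1_eq_Suc)
    then have "{vs ! i, vs ! (i + 1)} \<subseteq> S" using cl Suc unfolding closedS_def by (meson Suc_lessD disjoint_iff insertI1)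
    then show ?case by simp
  qed
  show ?thesis unfolding has_cycle_def
  proof (intro exI[of _ vs] conjI allI impI)
    fix i assume i: "i < length vs"
    have "(i + 1) mod length vs < length vs" using L by (intro mod_less_divisor) linarith
    then have "{vs ! i, vs ! ((i + 1) mod length vs)} \<subseteq> S" using inS i by simp
    moreover have "{vs ! i, vs ! ((i + 1) mod length vs)} \<in> pairs V" using E FV i by blast
    ultimately show "{vs ! i, vs ! ((i + 1) mod length vs)} \<in> F \<inter> pairs S"
      using E i unfolding pairs_def by blast
  qed (use L d in auto)
qed

lemma acyclic_split:
  assumes FV: "F \<subseteq> pairs V" and cl: "closedS F S"
    and n1: "\<not> has_cycle (F \<inter> pairs S)" and n2: "\<not> has_cycle (F \<inter> pairs (V - S))"
  shows "\<not> has_cycle F"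
proof
  assume "has_cycle F"
  then obtain vs where L: "length vs \<ge> 3" and d: "distinct vs"
    and E: "\<forall>i < length vs. {vs ! i, vs ! ((i + 1) mod length vs)} \<in> F"
    unfolding has_cycle_def by blast
  have "vs ! 0 \<in> set vs" using L by (intro nth_mem) linarith
  then have "vs ! 0 \<in> V" using cycle_verts[OF FV L E] by blast
  then show False
    using cycle_in_closed[OF FV cl L E d] cycle_in_closed[OF FV closed_compl[OF FV cl] L E d] n1 n2
    by blast
qed

lemma pow_sum_le:
  fixes a b :: real
  assumes "a \<ge> 0" "b \<ge> 0" "k \<ge> 1"
  shows "a ^ k + b ^ k \<le> (a + b) ^ k"
  using assms(3)
proof (induction k rule: dec_induct)
  case base then show ?case by simp
next
  case (step k)
  have "a ^ Suc k + b ^ Suc k = a * a ^ k + b * b ^ k" by simp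
  also have "\<dots> \<le> (a + b) * (a ^ k + b ^ k)"
    using assms(1,2) by (simp add: algebra_simps)
  also have "\<dots> \<le> (a + b) * (a + b) ^ k"
    using step.IH assms(1,2) by (intro mult_left_mono) auto
  finally show ?case by simp
qed

lemma pairs_disj2: "C \<inter> Y = {} \<Longrightarrow> pairs C \<inter> pairs Y = {}"
proof -
  assume CY: "C \<inter> Y = {}"
  { fix x :: "nat set" assume "x \<subseteq> C" "x \<subseteq> Y" "card x = 2"
    then have "x = {}" using CY by blast
    with \<open>card x = 2\<close> have False by simp }
  then show ?thesis unfolding pairs_def by blast
qed

lemma pairs_union_closed:
  assumes "closedS F C"
  shows "F \<inter> pairs (C \<union> Y) = (F \<inter> pairs C) \<union> (F \<inter> pairs Y)"
proof
  show "F \<inter> pairs (C \<union> Y) \<subseteq> F \<inter> pairs C \<union> F \<inter> pairs Y"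
  proof
    fix e assume e: "e \<in> F \<inter> pairs (C \<union> Y)"
    then have "e \<subseteq> C \<or> e \<inter> C = {}" using assms unfolding closedS_def by blast
    then show "e \<in> F \<inter> pairs C \<union> F \<inter> pairs Y" using e unfolding pairs_def by blast
  qed
  show "F \<inter> pairs C \<union> F \<inter> pairs Y \<subseteq> F \<inter> pairs (C \<union> Y)"
    using pairs_mono[of C "C \<union> Y"] pairs_mono[of Y "C \<union> Y"] by blast
qed

lemma a_add:
  assumes fC: "finite C" and fY: "finite Y" and CY: "C \<inter> Y = {}" and cl: "closedS F C"
    and nc: "\<not> has_cycle F"
  shows "card (C \<union> Y) - card (F \<inter> pairs (C \<union> Y))
       = (card C - card (F \<inter> pairs C)) + (card Y - card (F \<inter> pairs Y))"
proof -
  have fpC: "finite (F \<inter> pairs C)" using pairs_finite[OF fC] by blast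
  have fpY: "finite (F \<inter> pairs Y)" using pairs_finite[OF fY] by blast
  have "card (F \<inter> pairs (C \<union> Y)) = card (F \<inter> pairs C) + card (F \<inter> pairs Y)"
    unfolding pairs_union_closed[OF cl]
    by (rule card_Un_disjoint[OF fpC fpY]) (use pairs_disj2[OF CY] in blast)
  moreover have "card (C \<union> Y) = card C + card Y" using card_Un_disjoint[OF fC fY CY] .
  moreover have "card (F \<inter> pairs C) \<le> card C"
    by (rule forest_card_le[OF fC]) (use nc has_cycle_mono in blast)+
  moreover have "card (F \<inter> pairs Y) \<le> card Y"
    by (rule forest_card_le[OF fY]) (use nc has_cycle_mono in blast)+
  ultimately show ?thesis by linarith
qed

lemma split_ineq:
  fixes m1 m2 :: real
  assumes "finite V" "F \<subseteq> pairs V" "\<not> has_cycle F" and m1: "m1 \<ge> 0" and m2: "m2 \<ge> 0"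
  shows "(\<Sum>S\<in>{S. S \<subseteq> V \<and> closedS F S}.
            m1 ^ (card S - card (F \<inter> pairs S)) * m2 ^ (card (V - S) - card (F \<inter> pairs (V - S))))
         \<le> (m1 + m2) ^ (card V - card F)"
  using assms(1-3)
proof (induction "card V" arbitrary: V F rule: less_induct)
  case less
  note finV = less.prems(1) and FV = less.prems(2) and ncF = less.prems(3)
  show ?case
  proof (cases "V = {}")
    case True
    then have F0: "F = {}" using FV pairs_empty by auto
    have eq: "{S. S \<subseteq> V \<and> closedS F S} = {{}}" using True by (auto simp: closedS_def F0)
    show ?thesis unfolding eq using True F0 by simp
  next
    case False
    define CS where "CS = {C. C \<subseteq> V \<and> C \<noteq> {} \<and> closedS F C}"
    have VCS: "V \<in> CS" using False FV unfolding CS_def closedS_def pairs_def by auto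
    have finCS: "finite CS" unfolding CS_def using finV by auto
    have "Min (card ` CS) \<in> card ` CS" using finCS VCS by (intro Min_in) auto
    then obtain C where C: "C \<in> CS" and Cm: "card C = Min (card ` CS)" by auto
    have Cmin: "card C \<le> card C'" if "C' \<in> CS" for C' using Cm finCS that by simp
    have CV: "C \<subseteq> V" and Cne: "C \<noteq> {}" and Ccl: "closedS F C" using C unfolding CS_def by auto
    have finC: "finite C" using finV CV finite_subset by blast
    have dich: "C \<subseteq> S \<or> C \<inter> S = {}" if "S \<subseteq> V" "closedS F S" for S
    proof (rule ccontr)
      assume nd: "\<not> (C \<subseteq> S \<or> C \<inter> S = {})"
      have "closedS F (C \<inter> S)" using that(2) Ccl unfolding closedS_def by blast
      then have "C \<inter> S \<in> CS" using nd CV unfolding CS_def by blast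
      moreover have "card (C \<inter> S) < card C" using nd finC by (intro psubset_card_mono) auto
      ultimately show False using Cmin by fastforce
    qed
    define V' where "V' = V - C"
    define F' where "F' = F \<inter> pairs V'"
    have finV': "finite V'" using finV V'_def by simp
    have cV': "card V' < card V" unfolding V'_def using finV CV Cne by (intro psubset_card_mono) auto
    have F'V': "F' \<subseteq> pairs V'" unfolding F'_def by blast
    have ncF': "\<not> has_cycle F'" using ncF has_cycle_mono unfolding F'_def by blast
    define T where "T S' = m1 ^ (card S' - card (F' \<inter> pairs S')) *
                        m2 ^ (card (V' - S') - card (F' \<inter> pairs (V' - S')))" for S'
    define A' where "A' = {S'. S' \<subseteq> V' \<and> closedS F' S'}"
    have IH: "(\<Sum>S'\<in>A'. T S') \<le> (m1 + m2) ^ (card V' - card F')"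
      unfolding T_def A'_def using less.hyps[OF cV' finV' F'V' ncF'] .
    have FS: "F \<inter> pairs Y = F' \<inter> pairs Y" if "Y \<subseteq> V'" for Y
      unfolding F'_def using pairs_mono[OF that] by blast
    define aC where "aC = card C - card (F \<inter> pairs C)"
    have "card (F \<inter> pairs C) < card C"
      by (rule forest_card_less[OF finC Cne]) (use ncF has_cycle_mono in blast)+
    then have aC1: "aC \<ge> 1" unfolding aC_def by linarith
    define A where "A = {S. S \<subseteq> V \<and> closedS F S}"
    have AU: "A = A' \<union> (\<lambda>S'. C \<union> S') ` A'"
    proof
      show "A \<subseteq> A' \<union> (\<lambda>S'. C \<union> S') ` A'"
      proof
        fix S assume "S \<in> A"
        then have SV: "S \<subseteq> V" and Scl: "closedS F S" unfolding A_def by auto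
        show "S \<in> A' \<union> (\<lambda>S'. C \<union> S') ` A'"
        proof (cases "C \<inter> S = {}")
          case True
          then have "S \<in> A'" unfolding A'_def V'_def F'_def using SV Scl
            unfolding closedS_def by blast
          then show ?thesis by blast
        next
          case False
          then have CS: "C \<subseteq> S" using dich[OF SV Scl] by blast
          have "closedS F' (S - C)" unfolding closedS_def
          proof
            fix e assume "e \<in> F'"
            then have "e \<in> F" "e \<subseteq> V'" unfolding F'_def pairs_def by auto
            then have "e \<inter> C = {}" unfolding V'_def by blast
            moreover have "e \<subseteq> S \<or> e \<inter> S = {}" using Scl \<open>e \<in> F\<close> unfolding closedS_def by blast
            ultimately show "e \<subseteq> S - C \<or> e \<inter> (S - C) = {}" by blast
          qed
          then have "S - C \<in> A'" unfolding A'_def V'_def using SV by blast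
          moreover have "S = C \<union> (S - C)" using CS by blast
          ultimately show ?thesis by blast
        qed
      qed
      show "A' \<union> (\<lambda>S'. C \<union> S') ` A' \<subseteq> A"
      proof
        fix S assume "S \<in> A' \<union> (\<lambda>S'. C \<union> S') ` A'"
        then obtain S' where S': "S' \<in> A'" and SS: "S = S' \<or> S = C \<union> S'" by blast
        have S'V: "S' \<subseteq> V'" and S'cl: "closedS F' S'" using S' unfolding A'_def by auto
        have key: "e \<subseteq> C \<or> (e \<in> F' \<and> e \<inter> C = {})" if "e \<in> F" for e
        proof -
          have "e \<subseteq> C \<or> e \<inter> C = {}" using Ccl that unfolding closedS_def by blast
          moreover have ep: "e \<in> pairs V" using FV that by blast
          moreover have "e \<in> F'" if "e \<inter> C = {}"
          proof -
            have "e \<subseteq> V'" using ep that unfolding V'_def pairs_def by blast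
            then have "e \<in> pairs V'" using ep unfolding pairs_def by blast
            then show ?thesis unfolding F'_def using \<open>e \<in> F\<close> by blast
          qed
          ultimately show ?thesis by blast
        qed
        have "closedS F S'" unfolding closedS_def
        proof
          fix e assume "e \<in> F"
          then show "e \<subseteq> S' \<or> e \<inter> S' = {}"
            using key[of e] S'cl S'V unfolding closedS_def V'_def by blast
        qed
        moreover have "closedS F (C \<union> S')" unfolding closedS_def
        proof
          fix e assume "e \<in> F"
          then show "e \<subseteq> C \<union> S' \<or> e \<inter> (C \<union> S') = {}"
            using key[of e] S'cl unfolding closedS_def by blast
        qed
        moreover have "S' \<subseteq> V" "C \<union> S' \<subseteq> V" using S'V CV unfolding V'_def by auto
        ultimately show "S \<in> A" unfolding A_def using SS by blast
      qed
    qed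
    have disj: "A' \<inter> (\<lambda>S'. C \<union> S') ` A' = {}"
      using Cne unfolding A'_def V'_def by blast
    have inj: "inj_on (\<lambda>S'. C \<union> S') A'"
    proof (rule inj_onI)
      fix x y assume "x \<in> A'" "y \<in> A'" "C \<union> x = C \<union> y"
      then have "x \<subseteq> V - C" "y \<subseteq> V - C" unfolding A'_def V'_def by auto
      then show "x = y" using \<open>C \<union> x = C \<union> y\<close> by blast
    qed
    have finA': "finite A'" unfolding A'_def using finV' by auto
    define trm where "trm S = m1 ^ (card S - card (F \<inter> pairs S)) *
                        m2 ^ (card (V - S) - card (F \<inter> pairs (V - S)))" for S
    have t1: "trm S' = m2 ^ aC * T S'" if "S' \<in> A'" for S'
    proof -
      have S'V: "S' \<subseteq> V'" using that unfolding A'_def by auto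
      have VS: "V - S' = C \<union> (V' - S')" using CV S'V unfolding V'_def by blast
      have "card (V - S') - card (F \<inter> pairs (V - S')) = aC + (card (V' - S') - card (F \<inter> pairs (V' - S')))"
        unfolding VS aC_def by (rule a_add[OF finC _ _ Ccl ncF]) (use finV' V'_def in auto)
      moreover have "F \<inter> pairs (V' - S') = F' \<inter> pairs (V' - S')" by (rule FS) blast
      moreover have "F \<inter> pairs S' = F' \<inter> pairs S'" by (rule FS[OF S'V])
      ultimately show ?thesis unfolding trm_def T_def by (simp add: power_add algebra_simps)
    qed
    have t2: "trm (C \<union> S') = m1 ^ aC * T S'" if "S' \<in> A'" for S'
    proof -
      have S'V: "S' \<subseteq> V'" using that unfolding A'_def by auto
      have VS: "V - (C \<union> S') = V' - S'" unfolding V'_def by blast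
      have "card (C \<union> S') - card (F \<inter> pairs (C \<union> S')) = aC + (card S' - card (F \<inter> pairs S'))"
        unfolding aC_def by (rule a_add[OF finC _ _ Ccl ncF]) (use finV' S'V finite_subset V'_def in auto)
      moreover have "F \<inter> pairs (V' - S') = F' \<inter> pairs (V' - S')" by (rule FS) blast
      moreover have "F \<inter> pairs S' = F' \<inter> pairs S'" by (rule FS[OF S'V])
      ultimately show ?thesis unfolding trm_def T_def VS by (simp add: power_add algebra_simps)
    qed
    have "(\<Sum>S\<in>A. trm S) = (\<Sum>S\<in>A'. trm S) + (\<Sum>S\<in>(\<lambda>S'. C \<union> S') ` A'. trm S)"
      unfolding AU by (rule sum.union_disjoint) (use finA' disj in auto)
    also have "\<dots> = (\<Sum>S'\<in>A'. m2 ^ aC * T S') + (\<Sum>S'\<in>A'. m1 ^ aC * T S')"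
      using t1 t2 by (simp add: sum.reindex[OF inj])
    also have "\<dots> = (m1 ^ aC + m2 ^ aC) * (\<Sum>S'\<in>A'. T S')"
      by (simp add: sum_distrib_left sum_distrib_right algebra_simps)
    also have "\<dots> \<le> (m1 + m2) ^ aC * (m1 + m2) ^ (card V' - card F')"
    proof (rule mult_mono)
      show "m1 ^ aC + m2 ^ aC \<le> (m1 + m2) ^ aC" using pow_sum_le[OF m1 m2 aC1] .
      show "(\<Sum>S'\<in>A'. T S') \<le> (m1 + m2) ^ (card V' - card F')" using IH .
      show "0 \<le> (m1 + m2) ^ aC" using m1 m2 by simp
      show "0 \<le> (\<Sum>S'\<in>A'. T S')" unfolding T_def using m1 m2 by (intro sum_nonneg) simp
    qed
    also have "\<dots> = (m1 + m2) ^ (card V - card F)"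
    proof -
      have VV: "V = C \<union> V'" using CV unfolding V'_def by blast
      have "card (C \<union> V') - card (F \<inter> pairs (C \<union> V')) = aC + (card V' - card (F \<inter> pairs V'))"
        unfolding aC_def by (rule a_add[OF finC finV' _ Ccl ncF]) (use V'_def in auto)
      moreover have "F \<inter> pairs (C \<union> V') = F" using FV VV by blast
      ultimately have "card V - card F = aC + (card V' - card F')" using VV F'_def by simp
      then show ?thesis by (simp add: power_add)
    qed
    finally show ?thesis unfolding A_def trm_def .
  qed
qed

lemma Gf_split:
  fixes m1 m2 :: real
  assumes finV: "finite V" and m1: "m1 \<ge> 0" and m2: "m2 \<ge> 0"
  shows "(\<Sum>S\<in>Pow V. Gf S m1 r * Gf (V - S) m2 r) \<le> Gf V (m1 + m2) r"
proof -
  define g :: "nat set \<times> nat set set \<times> nat set set \<Rightarrow> real"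
    where "g = (\<lambda>(S, F1, F2). m1 ^ (card S - card F1) * m2 ^ (card (V - S) - card F2))"
  define h :: "nat set set \<times> nat set \<Rightarrow> real"
    where "h = (\<lambda>(F, S). m1 ^ (card S - card (F \<inter> pairs S)) *
                           m2 ^ (card (V - S) - card (F \<inter> pairs (V - S))))"
  define X where "X = (SIGMA S:Pow V. forests S r \<times> forests (V - S) r)"
  define Y where "Y = (SIGMA F:forests V r. {S. S \<subseteq> V \<and> closedS F S})"
  have finPow: "finite (Pow V)" using finV by simp
  have fin1: "finite (forests S r)" if "S \<in> Pow V" for S
    using forests_finite finV that finite_subset by blast
  have fin2: "finite (forests (V - S) r)" for S
    using forests_finite finV by simp
  have "(\<Sum>S\<in>Pow V. Gf S m1 r * Gf (V - S) m2 r)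
      = (\<Sum>S\<in>Pow V. \<Sum>p\<in>forests S r \<times> forests (V - S) r. g (S, p))"
  proof (rule sum.cong[OF refl])
    fix S assume S: "S \<in> Pow V"
    show "Gf S m1 r * Gf (V - S) m2 r = (\<Sum>p\<in>forests S r \<times> forests (V - S) r. g (S, p))"
      unfolding Gf_def sum_product g_def
      by (subst sum.cartesian_product) simp
  qed
  also have "\<dots> = (\<Sum>x\<in>X. g x)"
    unfolding X_def by (subst sum.Sigma) (use finPow fin1 fin2 in auto)
  also have "\<dots> = (\<Sum>y\<in>Y. h y)"
  proof (rule sum.reindex_bij_witness[where i = "\<lambda>(F, S). (S, F \<inter> pairs S, F \<inter> pairs (V - S))"
        and j = "\<lambda>(S, F1, F2). (F1 \<union> F2, S)"])
    fix a assume a: "a \<in> X"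
    then obtain S F1 F2 where aa: "a = (S, F1, F2)" and SV: "S \<subseteq> V"
      and F1: "F1 \<in> forests S r" and F2: "F2 \<in> forests (V - S) r"
      unfolding X_def by auto
    have F1p: "F1 \<subseteq> pairs S" and F2p: "F2 \<subseteq> pairs (V - S)" using F1 F2 unfolding forests_def by auto
    have e1: "(F1 \<union> F2) \<inter> pairs S = F1" using F1p F2p pairs_disj[of S V] by blast
    have e2: "(F1 \<union> F2) \<inter> pairs (V - S) = F2" using F1p F2p pairs_disj[of S V] by blast
    show "(case case a of (S, F1, F2) \<Rightarrow> (F1 \<union> F2, S) of
            (F, S) \<Rightarrow> (S, F \<inter> pairs S, F \<inter> pairs (V - S))) = a"
      using aa e1 e2 by simp
    have Up: "F1 \<union> F2 \<subseteq> pairs V" using F1p F2p pairs_mono[of S V] pairs_mono[of "V - S" V] SV by blast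
    have cl: "closedS (F1 \<union> F2) S" unfolding closedS_def
    proof
      fix e assume "e \<in> F1 \<union> F2"
      then show "e \<subseteq> S \<or> e \<inter> S = {}" using F1p F2p unfolding pairs_def by blast
    qed
    have nc: "\<not> has_cycle (F1 \<union> F2)"
      by (rule acyclic_split[OF Up cl]) (use e1 e2 F1 F2 forests_def in auto)
    have sm: "smallc V r (F1 \<union> F2)"
      using smallc_split[OF Up cl SV] e1 e2 F1 F2 unfolding forests_def by auto
    show "(case a of (S, F1, F2) \<Rightarrow> (F1 \<union> F2, S)) \<in> Y"
      using aa Up nc sm cl SV unfolding Y_def forests_def by auto
    show "h (case a of (S, F1, F2) \<Rightarrow> (F1 \<union> F2, S)) = g a"
      using aa e1 e2 unfolding g_def h_def by simp
  next
    fix b assume b: "b \<in> Y"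
    then obtain F S where bb: "b = (F, S)" and F: "F \<in> forests V r" and SV: "S \<subseteq> V"
      and cl: "closedS F S" unfolding Y_def by auto
    have Fp: "F \<subseteq> pairs V" using F unfolding forests_def by auto
    show "(case case b of (F, S) \<Rightarrow> (S, F \<inter> pairs S, F \<inter> pairs (V - S)) of
            (S, F1, F2) \<Rightarrow> (F1 \<union> F2, S)) = b"
      using bb closed_split[OF Fp cl] by simp
    have nc: "\<not> has_cycle F" and sm: "smallc V r F" using F unfolding forests_def by auto
    have "F \<inter> pairs S \<in> forests S r"
      unfolding forests_def using smallc_split[OF Fp cl SV] sm nc has_cycle_mono by blast
    moreover have "F \<inter> pairs (V - S) \<in> forests (V - S) r"
      unfolding forests_def using smallc_split[OF Fp cl SV] sm nc has_cycle_mono by blast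
    ultimately show "(case b of (F, S) \<Rightarrow> (S, F \<inter> pairs S, F \<inter> pairs (V - S))) \<in> X"
      using bb SV unfolding X_def by auto
  qed
  also have "\<dots> = (\<Sum>F\<in>forests V r. \<Sum>S\<in>{S. S \<subseteq> V \<and> closedS F S}. h (F, S))"
    unfolding Y_def by (subst sum.Sigma) (use forests_finite[OF finV] finV in auto)
  also have "\<dots> \<le> (\<Sum>F\<in>forests V r. (m1 + m2) ^ (card V - card F))"
  proof (rule sum_mono)
    fix F assume "F \<in> forests V r"
    then have "F \<subseteq> pairs V" "\<not> has_cycle F" unfolding forests_def by auto
    then show "(\<Sum>S\<in>{S. S \<subseteq> V \<and> closedS F S}. h (F, S)) \<le> (m1 + m2) ^ (card V - card F)"
      unfolding h_def using split_ineq[OF finV _ _ m1 m2] by simp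
  qed
  also have "\<dots> = Gf V (m1 + m2) r" unfolding Gf_def ..
  finally show ?thesis .
qed

definition Psi :: "(nat \<Rightarrow> nat) \<Rightarrow> nat set set \<Rightarrow> nat set set" where
  "Psi f F = (\<lambda>e. f ` e) ` F"

lemma Psi_pairs:
  assumes "inj_on f V" "f ` V \<subseteq> W" "F \<subseteq> pairs V"
  shows "Psi f F \<subseteq> pairs W"
proof
  fix e' assume "e' \<in> Psi f F"
  then obtain e where e: "e \<in> F" "e' = f ` e" unfolding Psi_def by blast
  then have "e \<subseteq> V" "card e = 2" using assms(3) unfolding pairs_def by auto
  then have "card (f ` e) = 2" using assms(1) by (metis card_image inj_on_subset)
  then show "e' \<in> pairs W" using e \<open>e \<subseteq> V\<close> assms(2) unfolding pairs_def by blast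
qed

lemma Psi_card:
  assumes "inj_on f V" "F \<subseteq> pairs V"
  shows "card (Psi f F) = card F"
proof -
  have "inj_on (\<lambda>e. f ` e) F"
  proof (rule inj_onI)
    fix x y assume "x \<in> F" "y \<in> F" "f ` x = f ` y"
    then show "x = y" using inj_on_image_eq_iff[OF assms(1)] assms(2) unfolding pairs_def by blast
  qed
  then show ?thesis unfolding Psi_def by (rule card_image)
qed

lemma Psi_cycle:
  assumes inj: "inj_on f V" and FV: "F \<subseteq> pairs V" and hc: "has_cycle F"
  shows "has_cycle (Psi f F)"
proof -
  obtain vs where L: "length vs \<ge> 3" and d: "distinct vs"
    and E: "\<forall>i < length vs. {vs ! i, vs ! ((i + 1) mod length vs)} \<in> F"
    using hc unfolding has_cycle_def by blast
  have sv: "set vs \<subseteq> V" using cycle_verts[OF FV L E] .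
  show ?thesis unfolding has_cycle_def
  proof (intro exI[of _ "map f vs"] conjI allI impI)
    show "3 \<le> length (map f vs)" using L by simp
    show "distinct (map f vs)" using d inj sv by (simp add: distinct_map inj_on_subset)
    fix i assume i: "i < length (map f vs)"
    have m: "(i + 1) mod length vs < length vs" using L by (intro mod_less_divisor) linarith
    have "{vs ! i, vs ! ((i + 1) mod length vs)} \<in> F" using E i by simp
    then have "f ` {vs ! i, vs ! ((i + 1) mod length vs)} \<in> Psi f F"
      unfolding Psi_def by (rule imageI)
    then show "{map f vs ! i, map f vs ! ((i + 1) mod length (map f vs))} \<in> Psi f F"
      using i m by simp
  qed
qed

lemma Psi_reach:
  assumes "(adj F)\<^sup>*\<^sup>* a b"
  shows "(adj (Psi f F))\<^sup>*\<^sup>* (f a) (f b)"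
  using assms
proof (induction rule: rtranclp_induct)
  case base then show ?case by simp
next
  case (step y z)
  have "{y, z} \<in> F" using step.hyps(2) unfolding adj_def by simp
  then have "f ` {y, z} \<in> Psi f F" unfolding Psi_def by blast
  then have "adj (Psi f F) (f y) (f z)" unfolding adj_def by simp
  with step.IH show ?case by (rule rtranclp.rtrancl_into_rtrancl)
qed

lemma Psi_cancel:
  assumes "\<forall>x\<in>V. g (f x) = x" "F \<subseteq> pairs V"
  shows "Psi g (Psi f F) = F"
proof -
  have "(\<lambda>e. g ` f ` e) ` F = (\<lambda>e. e) ` F"
  proof (rule image_cong[OF refl])
    fix e assume "e \<in> F"
    then have "e \<subseteq> V" using assms(2) unfolding pairs_def by auto
    then show "g ` f ` e = e" using assms(1) by (force simp: image_image)
  qed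
  then show ?thesis unfolding Psi_def image_image by simp
qed

lemma Psi_forest:
  assumes bf: "bij_betw f V W" and bg: "bij_betw g W V"
    and gf: "\<forall>x\<in>V. g (f x) = x" and fg: "\<forall>y\<in>W. f (g y) = y"
    and F: "F \<in> forests V r"
  shows "Psi f F \<in> forests W r"
proof -
  have injf: "inj_on f V" and injg: "inj_on g W" using bf bg bij_betw_def by auto
  have fV: "f ` V = W" using bf by (simp add: bij_betw_def)
  have FV: "F \<subseteq> pairs V" and nc: "\<not> has_cycle F" and sm: "smallc V r F"
    using F unfolding forests_def by auto
  have PW: "Psi f F \<subseteq> pairs W" using Psi_pairs[OF injf _ FV] fV by simp
  have nc': "\<not> has_cycle (Psi f F)"
  proof
    assume "has_cycle (Psi f F)"
    then have "has_cycle (Psi g (Psi f F))" using Psi_cycle[OF injg PW] by blast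
    then show False using Psi_cancel[where g=g and f=f, OF gf FV] nc by simp
  qed
  have sm': "smallc W r (Psi f F)" unfolding smallc_def
  proof
    fix w assume w: "w \<in> W"
    then obtain v where v: "v \<in> V" "w = f v" using fV by blast
    have "reach (Psi f F) w = f ` reach F v"
    proof
      show "reach (Psi f F) w \<subseteq> f ` reach F v"
      proof
        fix c assume "c \<in> reach (Psi f F) w"
        then have rc: "(adj (Psi f F))\<^sup>*\<^sup>* w c" unfolding reach_def by simp
        then have cW: "c \<in> W" using reach_in[OF PW w] by blast
        have "(adj (Psi g (Psi f F)))\<^sup>*\<^sup>* (g w) (g c)" using Psi_reach[OF rc] .
        then have "(adj F)\<^sup>*\<^sup>* v (g c)" using Psi_cancel[where g=g and f=f, OF gf FV] v gf by simp
        moreover have "c = f (g c)" using fg cW by simp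
        ultimately show "c \<in> f ` reach F v" unfolding reach_def by blast
      qed
      show "f ` reach F v \<subseteq> reach (Psi f F) w"
        unfolding reach_def using Psi_reach v by blast
    qed
    moreover have "reach F v \<subseteq> V" unfolding reach_def using reach_in[OF FV v(1)] by blast
    ultimately have "card (reach (Psi f F) w) = card (reach F v)"
      using injf by (simp add: card_image inj_on_subset)
    then show "real (card (reach (Psi f F) w)) \<le> r" using sm v unfolding smallc_def by simp
  qed
  show ?thesis unfolding forests_def using PW nc' sm' by blast
qed

lemma Gf_bij:
  assumes bf: "bij_betw f V W"
  shows "Gf V m r = Gf W m r"
proof -
  define g where "g = inv_into V f"
  have bg: "bij_betw g W V" unfolding g_def using bf by (rule bij_betw_inv_into)
  have gf: "\<forall>x\<in>V. g (f x) = x" unfolding g_def using bf by (simp add: bij_betw_def)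
  have fg: "\<forall>y\<in>W. f (g y) = y" unfolding g_def using bf by (simp add: bij_betw_def f_inv_into_f)
  have injf: "inj_on f V" using bf bij_betw_def by auto
  have cVW: "card V = card W" using bf by (rule bij_betw_same_card)
  show ?thesis unfolding Gf_def
  proof (rule sum.reindex_bij_witness[where i = "Psi g" and j = "Psi f"])
    fix a assume "a \<in> forests V r"
    then have aV: "a \<subseteq> pairs V" unfolding forests_def by auto
    show "Psi g (Psi f a) = a" using Psi_cancel[where g=g and f=f, OF gf aV] .
    show "Psi f a \<in> forests W r" using Psi_forest[OF bf bg gf fg] \<open>a \<in> forests V r\<close> .
    show "m ^ (card W - card (Psi f a)) = m ^ (card V - card a)"
      using Psi_card[OF injf aV] cVW by simp
  next
    fix b assume "b \<in> forests W r"
    then have bW: "b \<subseteq> pairs W" unfolding forests_def by auto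
    show "Psi f (Psi g b) = b" using Psi_cancel[where g=f and f=g, OF fg bW] .
    show "Psi g b \<in> forests V r" using Psi_forest[OF bg bf fg gf] \<open>b \<in> forests W r\<close> .
  qed
qed

definition gf :: "nat \<Rightarrow> real \<Rightarrow> real \<Rightarrow> real" where
  "gf n m r = Gf {1..n} m r"

lemma Gf_card: "finite S \<Longrightarrow> Gf S m r = gf (card S) m r"
proof -
  assume "finite S"
  then obtain h where "bij_betw h {1..card S} S" using ex_bij_betw_nat_finite_1 by blast
  then show ?thesis unfolding gf_def using Gf_bij by metis
qed

lemma gf_superadd:
  fixes m1 m2 :: real
  assumes m1: "m1 \<ge> 0" and m2: "m2 \<ge> 0"
  shows "real ((n1 + n2) choose n1) * gf n1 m1 r * gf n2 m2 r \<le> gf (n1 + n2) (m1 + m2) r"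
proof -
  define V where "V = {1..n1 + n2}"
  have finV: "finite V" unfolding V_def by simp
  have cV: "card V = n1 + n2" unfolding V_def by simp
  define K where "K = {S. S \<subseteq> V \<and> card S = n1}"
  have "real ((n1 + n2) choose n1) * gf n1 m1 r * gf n2 m2 r = (\<Sum>S\<in>K. gf n1 m1 r * gf n2 m2 r)"
    unfolding K_def using n_subsets[OF finV, of n1] cV by simp
  also have "\<dots> = (\<Sum>S\<in>K. Gf S m1 r * Gf (V - S) m2 r)"
  proof (rule sum.cong[OF refl])
    fix S assume "S \<in> K"
    then have "S \<subseteq> V" "card S = n1" unfolding K_def by auto
    moreover have "card (V - S) = n2" using calculation finV cV by (simp add: card_Diff_subset finite_subset)
    ultimately show "gf n1 m1 r * gf n2 m2 r = Gf S m1 r * Gf (V - S) m2 r"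
      using Gf_card finV finite_subset by (metis finite_Diff)
  qed
  also have "\<dots> \<le> (\<Sum>S\<in>Pow V. Gf S m1 r * Gf (V - S) m2 r)"
    by (rule sum_mono2) (use finV K_def Gf_nonneg m1 m2 in auto)
  also have "\<dots> \<le> Gf V (m1 + m2) r" using Gf_split[OF finV m1 m2] .
  finally show ?thesis unfolding gf_def V_def .
qed

lemma pow_fact_le_exp:
  fixes x :: real
  assumes "x \<ge> 0"
  shows "x ^ n / fact n \<le> exp x"
proof -
  have s: "(\<lambda>k. x ^ k /\<^sub>R fact k) sums exp x" by (rule exp_converges)
  have "sum (\<lambda>k. x ^ k /\<^sub>R fact k) {n} \<le> suminf (\<lambda>k. x ^ k /\<^sub>R fact k)"
    by (rule sum_le_suminf) (use s sums_summable assms in auto)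
  then show ?thesis using sums_unique[OF s] by (simp add: divide_inverse_commute)
qed

lemma sum_pow_card_Pow:
  fixes x :: real
  assumes "finite W"
  shows "(\<Sum>S\<in>Pow W. x ^ card S) = (1 + x) ^ card W"
proof -
  have "(\<Prod>a\<in>W. x + 1) = (\<Sum>X\<in>Pow W. (\<Prod>a\<in>X. x) * (\<Prod>a\<in>W - X. 1))"
    by (rule prod_add[OF assms])
  then show ?thesis by (simp add: add.commute)
qed

lemma mult_seq_ge:
  fixes a :: "nat \<Rightarrow> real"
  assumes sup: "\<And>m n. m \<ge> 1 \<Longrightarrow> n \<ge> 1 \<Longrightarrow> a (m + n) \<ge> a m + a n"
    and "k \<ge> 1" "q \<ge> 1"
  shows "a (q * k) \<ge> real q * a k"
  using assms(3)
proof (induction q rule: dec_induct)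
  case base then show ?case by simp
next
  case (step q)
  have "a (Suc q * k) = a (q * k + k)" by (simp add: add.commute)
  also have "\<dots> \<ge> a (q * k) + a k" using sup[of "q * k" k] step.hyps assms(2) by simp
  finally show ?case using step.IH by (simp add: algebra_simps)
qed

lemma fekete:
  fixes a :: "nat \<Rightarrow> real"
  assumes sup: "\<And>m n. m \<ge> 1 \<Longrightarrow> n \<ge> 1 \<Longrightarrow> a (m + n) \<ge> a m + a n"
    and bnd: "\<And>n. n \<ge> 1 \<Longrightarrow> a n \<le> real n * M"
  shows "(\<lambda>n. a n / real n) \<longlonglongrightarrow> (SUP n\<in>{1..}. a n / real n)"
    and "\<And>n. n \<ge> 1 \<Longrightarrow> a n / real n \<le> (SUP n\<in>{1..}. a n / real n)"
proof -
  define L where "L = (SUP n\<in>{1..}. a n / real n)"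
  have bdd: "bdd_above ((\<lambda>n. a n / real n) ` {1..})"
    by (rule bdd_aboveI[of _ M]) (use bnd in \<open>auto simp: divide_le_eq mult.commute\<close>)
  show up: "a n / real n \<le> (SUP n\<in>{1..}. a n / real n)" if "n \<ge> 1" for n
    by (rule cSUP_upper[OF _ bdd]) (use that in auto)
  show "(\<lambda>n. a n / real n) \<longlonglongrightarrow> (SUP n\<in>{1..}. a n / real n)"
  proof (rule order_tendstoI)
    fix y assume "y > (SUP n\<in>{1..}. a n / real n)"
    then show "eventually (\<lambda>n. y > a n / real n) sequentially"
      using up unfolding eventually_sequentially by (meson le_less_trans)
  next
    fix y assume "y < (SUP n\<in>{1..}. a n / real n)"
    then obtain k where k1: "k \<ge> 1" and yk: "y < a k / real k"
      using less_cSUP_iff[OF _ bdd] by auto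
    define A where "A = a k / real k"
    define c where "c = Min (insert 0 (a ` {1..<k}))"
    have c0: "c \<le> 0" unfolding c_def by (rule Min_le) auto
    have cs: "c \<le> a s" if "s \<in> {1..<k}" for s unfolding c_def by (rule Min_le) (use that in auto)
    define D where "D = real k * \<bar>A\<bar> - c"
    define \<delta> where "\<delta> = A - y"
    have dpos: "\<delta> > 0" unfolding \<delta>_def A_def using yk by simp
    obtain N :: nat where N: "real N > D / \<delta>" using reals_Archimedean2 by blast
    show "eventually (\<lambda>n. y < a n / real n) sequentially"
      unfolding eventually_sequentially
    proof (intro exI[of _ "max N 1"] allI impI)
      fix n assume n: "n \<ge> max N 1"
      define q where "q = n div k"
      define s where "s = n mod k"
      have ns: "n = q * k + s" unfolding q_def s_def by simp
      have sk: "s < k" unfolding s_def using k1 by simp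
      have ak: "a k = real k * A" unfolding A_def using k1 by simp
      have main: "a n \<ge> real q * a k + c"
      proof (cases "q \<ge> 1")
        case True
        have aq: "a (q * k) \<ge> real q * a k" by (rule mult_seq_ge[OF sup k1 True])
        show ?thesis
        proof (cases "s = 0")
          case True then show ?thesis using aq ns c0 by simp
        next
          case False
          have "a n \<ge> a (q * k) + a s" using sup[of "q * k" s] ns False k1 \<open>q \<ge> 1\<close> by simp
          moreover have "c \<le> a s" using cs False sk by simp
          ultimately show ?thesis using aq by linarith
        qed
      next
        case False
        then have "q = 0" by simp
        then have "n = s" using ns by simp
        then have "s \<ge> 1" using n by simp
        then have "c \<le> a n" using cs sk \<open>n = s\<close> by simp
        then show ?thesis using \<open>q = 0\<close> by simp
      qed
      have qk1: "real q * real k \<le> real n" using ns by (simp add: of_nat_mult[symmetric] del: of_nat_mult)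
      have qk2: "real q * real k \<ge> real n - real k" using ns sk
        by (simp add: of_nat_mult[symmetric] del: of_nat_mult)
      have "real q * a k = (real q * real k) * A" using ak by simp
      also have "\<dots> \<ge> real n * A - real k * \<bar>A\<bar>"
      proof (cases "A \<ge> 0")
        case True
        then have "(real q * real k) * A \<ge> (real n - real k) * A" using qk2 by (intro mult_right_mono) auto
        then show ?thesis using True by (simp add: algebra_simps)
      next
        case False
        then have h1: "(real q * real k) * A \<ge> real n * A" using qk1 by (intro mult_right_mono_neg) auto
        have "real k * A \<le> 0" using False by (simp add: mult_nonneg_nonpos)
        moreover have "real k * \<bar>A\<bar> = - (real k * A)" using False by simp
        ultimately show ?thesis using h1 by linarith
      qed
      finally have "a n \<ge> real n * A - D" using main unfolding D_def by linarith
      moreover have "real n > D / \<delta>" using N n by simp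
      then have "D < real n * \<delta>" using dpos by (simp add: divide_less_eq)
      ultimately have "a n > real n * y" unfolding \<delta>_def by (simp add: algebra_simps)
      then show "y < a n / real n" using n by (simp add: less_divide_eq mult.commute)
    qed
  qed
qed

definition forests_all :: "nat set \<Rightarrow> nat set set set" where
  "forests_all V = {F. F \<subseteq> pairs V \<and> \<not> has_cycle F}"

lemma reach_empty: "reach {} v = {v}"
proof -
  have "(adj {})\<^sup>*\<^sup>* v w \<longleftrightarrow> w = v" for w
  proof
    assume "(adj {})\<^sup>*\<^sup>* v w"
    then show "w = v" by (induction rule: rtranclp_induct) (auto simp: adj_def)
  qed simp
  then show ?thesis unfolding reach_def by auto
qed

lemma empty_in_forests: "r \<ge> 1 \<Longrightarrow> {} \<in> forests V r"
  unfolding forests_def smallc_def using no_cycle_empty reach_empty by auto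

lemma forests_full:
  assumes "finite V" "r \<ge> real (card V)"
  shows "forests V r = forests_all V"
proof -
  have "smallc V r F" if "F \<subseteq> pairs V" for F
    unfolding smallc_def
  proof
    fix v assume v: "v \<in> V"
    have "reach F v \<subseteq> V" unfolding reach_def using reach_in[OF that v] by blast
    then have "card (reach F v) \<le> card V" using assms(1) by (rule card_mono[rotated])
    then show "real (card (reach F v)) \<le> r" using assms(2) by linarith
  qed
  then show ?thesis unfolding forests_def forests_all_def by blast
qed

lemma forests_sub_all: "forests V r \<subseteq> forests_all V"
  unfolding forests_def forests_all_def by blast

lemma forests_mono: "r \<le> r' \<Longrightarrow> forests V r \<subseteq> forests V r'"
  unfolding forests_def smallc_def by force

lemma gf_pos:
  assumes "m > 0" "r \<ge> 1"
  shows "gf n m r > 0"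
proof -
  have "m ^ (card {1..n} - card ({}::nat set set)) \<le> Gf {1..n} m r"
    unfolding Gf_def
    by (rule member_le_sum[of "{}"]) (use assms empty_in_forests forests_finite in auto)
  moreover have "m ^ (card {1..n} - card ({}::nat set set)) > 0" using assms by simp
  ultimately show ?thesis unfolding gf_def by linarith
qed

lemma gf_nonneg: "m \<ge> 0 \<Longrightarrow> gf n m r \<ge> 0"
  unfolding gf_def by (rule Gf_nonneg)

lemma gf_mono_r:
  assumes "m \<ge> 0" "r \<le> r'"
  shows "gf n m r \<le> gf n m r'"
  unfolding gf_def Gf_def
  by (rule sum_mono2) (use forests_finite forests_mono[OF assms(2)] assms(1) in auto)

lemma gf_scale:
  assumes "0 \<le> m'" "m' \<le> m" "m > 0"
  shows "(m' / m) ^ n * gf n m r \<le> gf n m' r"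
  unfolding gf_def Gf_def sum_distrib_left
proof (rule sum_mono)
  fix F assume "F \<in> forests {1..n} r"
  define k where "k = card {1..n} - card F"
  have kn: "k \<le> n" unfolding k_def by simp
  have q: "0 \<le> m' / m" "m' / m \<le> 1" using assms by (auto simp: divide_le_eq)
  have "(m' / m) ^ n \<le> (m' / m) ^ k" using power_decreasing[OF kn q] .
  then have "(m' / m) ^ n * m ^ k \<le> (m' / m) ^ k * m ^ k" using assms by (intro mult_right_mono) auto
  also have "\<dots> = m' ^ k" using assms by (simp add: power_divide)
  finally show "(m' / m) ^ n * m ^ (card {1..n} - card F) \<le> m' ^ (card {1..n} - card F)"
    unfolding k_def .
qed

lemma card_pairs_le: "card (pairs {1..n}) \<le> n * n"
proof -
  have "pairs {1..n} \<subseteq> (\<lambda>(a, b). {a, b}) ` ({1..n} \<times> {1..n})"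
  proof
    fix e assume "e \<in> pairs {1..n}"
    then obtain a b where "a \<noteq> b" "e = {a, b}" "e \<subseteq> {1..n}" unfolding pairs_def using card2_eq by blast
    then show "e \<in> (\<lambda>(a, b). {a, b}) ` ({1..n} \<times> {1..n})" by auto
  qed
  then have "card (pairs {1..n}) \<le> card ((\<lambda>(a, b). {a, b}) ` ({1..n} \<times> {1..n}))"
    by (rule card_mono[rotated]) simp
  also have "\<dots> \<le> card ({1..n} \<times> {1..n})" by (rule card_image_le) simp
  finally show ?thesis by (simp add: card_cartesian_product)
qed

lemma gf_upper:
  assumes "m > 0"
  shows "gf n m r \<le> m ^ n * exp (real (n * n) / m)"
proof -
  define P where "P = pairs {1..n}"
  have finP: "finite P" unfolding P_def by (simp add: pairs_finite)
  have "gf n m r = (\<Sum>F\<in>forests {1..n} r. m ^ n * (1 / m) ^ card F)"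
    unfolding gf_def Gf_def
  proof (rule sum.cong[OF refl])
    fix F assume "F \<in> forests {1..n} r"
    then have "card F \<le> n" using forest_card_le[of "{1..n}" F] unfolding forests_def by auto
    then show "m ^ (card {1..n} - card F) = m ^ n * (1 / m) ^ card F"
      using assms by (simp add: power_diff power_one_over divide_inverse power_inverse)
  qed
  also have "\<dots> \<le> (\<Sum>F\<in>Pow P. m ^ n * (1 / m) ^ card F)"
    by (rule sum_mono2) (use finP assms in \<open>auto simp: forests_def P_def\<close>)
  also have "\<dots> = m ^ n * (1 + 1 / m) ^ card P"
    unfolding sum_distrib_left[symmetric] using sum_pow_card_Pow[OF finP] by simp
  also have "\<dots> \<le> m ^ n * exp (1 / m) ^ card P"
    using assms by (intro mult_left_mono power_mono) (auto simp: add.commute)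
  also have "\<dots> = m ^ n * exp (real (card P) / m)"
    using exp_of_nat_mult[of "card P" "1 / m"] by simp
  also have "\<dots> \<le> m ^ n * exp (real (n * n) / m)"
  proof -
    have "real (card P) \<le> real (n * n)" using card_pairs_le[of n] unfolding P_def by linarith
    then have "real (card P) / m \<le> real (n * n) / m" using assms by (intro divide_right_mono) auto
    then show ?thesis using assms by (intro mult_left_mono) auto
  qed
  finally show ?thesis .
qed

definition Hq :: "real \<Rightarrow> real \<Rightarrow> nat \<Rightarrow> real" where
  "Hq \<alpha> r n = gf n (real n / \<alpha>) r / fact n"

lemma Hq_pos: "\<alpha> > 0 \<Longrightarrow> r \<ge> 1 \<Longrightarrow> n \<ge> 1 \<Longrightarrow> Hq \<alpha> r n > 0"
  unfolding Hq_def by (intro divide_pos_pos gf_pos) auto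

lemma Hq_super:
  assumes "\<alpha> > 0" "n1 \<ge> 1" "n2 \<ge> 1"
  shows "Hq \<alpha> r n1 * Hq \<alpha> r n2 \<le> Hq \<alpha> r (n1 + n2)"
proof -
  have m: "real (n1 + n2) / \<alpha> = real n1 / \<alpha> + real n2 / \<alpha>" by (simp add: add_divide_distrib)
  have "real ((n1 + n2) choose n1) * gf n1 (real n1 / \<alpha>) r * gf n2 (real n2 / \<alpha>) r
        \<le> gf (n1 + n2) (real (n1 + n2) / \<alpha>) r"
    unfolding m by (rule gf_superadd) (use assms in auto)
  moreover have "real ((n1 + n2) choose n1) = fact (n1 + n2) / (fact n1 * fact n2)"
    using binomial_fact[of n1 "n1 + n2"] by simp
  ultimately have "fact (n1 + n2) / (fact n1 * fact n2) * gf n1 (real n1 / \<alpha>) r * gf n2 (real n2 / \<alpha>) r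
        \<le> gf (n1 + n2) (real (n1 + n2) / \<alpha>) r" by simp
  then show ?thesis unfolding Hq_def
    by (simp add: field_simps)
qed

lemma Hq_bound:
  assumes a: "\<alpha> > 0" and n: "n \<ge> 1"
  shows "Hq \<alpha> r n \<le> (exp (1 + \<alpha>) / \<alpha>) ^ n"
proof -
  have mpos: "real n / \<alpha> > 0" using a n by simp
  have "gf n (real n / \<alpha>) r \<le> (real n / \<alpha>) ^ n * exp (real (n * n) / (real n / \<alpha>))"
    using gf_upper[OF mpos] .
  also have "real (n * n) / (real n / \<alpha>) = \<alpha> * real n" using a n by (simp add: field_simps)
  finally have g: "gf n (real n / \<alpha>) r \<le> (real n / \<alpha>) ^ n * exp (\<alpha> * real n)" .
  have f: "real n ^ n / fact n \<le> exp (real n)" by (rule pow_fact_le_exp) simp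
  have "Hq \<alpha> r n \<le> (real n / \<alpha>) ^ n * exp (\<alpha> * real n) / fact n"
    unfolding Hq_def using g by (intro divide_right_mono) auto
  also have "\<dots> = (real n ^ n / fact n) * (exp (\<alpha> * real n) / \<alpha> ^ n)"
    by (simp add: power_divide)
  also have "\<dots> \<le> exp (real n) * (exp (\<alpha> * real n) / \<alpha> ^ n)"
    using f a by (intro mult_right_mono) auto
  also have "\<dots> = (exp (1 + \<alpha>) / \<alpha>) ^ n"
  proof -
    have "exp (real n) * exp (\<alpha> * real n) = exp (real n * (1 + \<alpha>))"
      by (simp add: exp_add[symmetric] algebra_simps)
    also have "\<dots> = exp (1 + \<alpha>) ^ n" by (rule exp_of_nat_mult)
    finally show ?thesis by (simp add: power_divide)
  qed
  finally show ?thesis .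
qed

definition hr :: "real \<Rightarrow> real \<Rightarrow> real" where
  "hr \<alpha> r = exp (SUP n\<in>{1..}. ln (Hq \<alpha> r n) / real n)"

lemma root_exp_ln: "n \<ge> 1 \<Longrightarrow> x > 0 \<Longrightarrow> root n x = exp (ln x / real n)"
  using ln_root[of n x] by (metis exp_ln gr0I not_one_le_zero real_root_gt_zero)

lemma hr_props:
  assumes a: "\<alpha> > 0" and r: "r \<ge> 1"
  shows "(\<lambda>n. root n (Hq \<alpha> r n)) \<longlonglongrightarrow> hr \<alpha> r"
    and "\<And>n. n \<ge> 1 \<Longrightarrow> root n (Hq \<alpha> r n) \<le> hr \<alpha> r"
proof -
  define a where "a n = ln (Hq \<alpha> r n)" for n
  define M where "M = ln (exp (1 + \<alpha>) / \<alpha>)"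
  have sup: "a m + a n \<le> a (m + n)" if "m \<ge> 1" "n \<ge> 1" for m n
  proof -
    have "ln (Hq \<alpha> r m * Hq \<alpha> r n) \<le> ln (Hq \<alpha> r (m + n))"
      using Hq_super[OF a that] Hq_pos[OF a r] that by (subst ln_le_cancel_iff) auto
    moreover have "Hq \<alpha> r m > 0" "Hq \<alpha> r n > 0" using Hq_pos[OF a r] that by auto
    ultimately show ?thesis unfolding a_def by (simp add: ln_mult)
  qed
  have bnd: "a n \<le> real n * M" if "n \<ge> 1" for n
  proof -
    have "a n \<le> ln ((exp (1 + \<alpha>) / \<alpha>) ^ n)" unfolding a_def
      using Hq_bound[OF a that] Hq_pos[OF a r that] a by (subst ln_le_cancel_iff) auto
    also have "\<dots> = real n * M" unfolding M_def using a by (simp add: ln_realpow)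
    finally show ?thesis .
  qed
  have fk1: "(\<lambda>n. a n / real n) \<longlonglongrightarrow> (SUP n\<in>{1..}. a n / real n)"
    by (rule fekete(1)[of a M]) (use sup bnd in auto)
  have fk2: "a n / real n \<le> (SUP n\<in>{1..}. a n / real n)" if "n \<ge> 1" for n
    by (rule fekete(2)[of a M]) (use sup bnd that in auto)
  have eq: "root n (Hq \<alpha> r n) = exp (a n / real n)" if "n \<ge> 1" for n
    unfolding a_def using root_exp_ln[OF that Hq_pos[OF a r that]] .
  have "(\<lambda>n. exp (a n / real n)) \<longlonglongrightarrow> hr \<alpha> r"
    unfolding hr_def a_def[symmetric] by (intro tendsto_exp fk1)
  then show "(\<lambda>n. root n (Hq \<alpha> r n)) \<longlonglongrightarrow> hr \<alpha> r"
    by (rule Lim_transform_eventually) (use eq in \<open>auto simp: eventually_sequentially intro!: exI[of _ 1]\<close>)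
  show "root n (Hq \<alpha> r n) \<le> hr \<alpha> r" if "n \<ge> 1" for n
    unfolding eq[OF that] hr_def a_def[symmetric] using fk2[OF that] by simp
qed

lemma hr_pos: "hr \<alpha> r > 0"
  unfolding hr_def by simp

lemma hr_bound:
  assumes a: "\<alpha> > 0" and r: "r \<ge> 1"
  shows "hr \<alpha> r \<le> exp (1 + \<alpha>) / \<alpha>"
proof (rule LIMSEQ_le_const2[OF hr_props(1)[OF a r]])
  show "\<exists>N. \<forall>n\<ge>N. root n (Hq \<alpha> r n) \<le> exp (1 + \<alpha>) / \<alpha>"
  proof (intro exI[of _ 1] allI impI)
    fix n :: nat assume n: "n \<ge> 1"
    have "root n (Hq \<alpha> r n) \<le> root n ((exp (1 + \<alpha>) / \<alpha>) ^ n)"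
      using Hq_bound[OF a n] n by (intro real_root_le_mono) auto
    also have "\<dots> = exp (1 + \<alpha>) / \<alpha>" using n a by (intro real_root_power_cancel) auto
    finally show "root n (Hq \<alpha> r n) \<le> exp (1 + \<alpha>) / \<alpha>" .
  qed
qed

lemma hr_mono:
  assumes a: "\<alpha> > 0" and r: "r \<ge> 1" and rr: "r \<le> r'"
  shows "hr \<alpha> r \<le> hr \<alpha> r'"
proof (rule LIMSEQ_le[OF hr_props(1)[OF a r] hr_props(1)[OF a]])
  show "1 \<le> r'" using r rr by linarith
  show "\<exists>N. \<forall>n\<ge>N. root n (Hq \<alpha> r n) \<le> root n (Hq \<alpha> r' n)"
  proof (intro exI[of _ 1] allI impI)
    fix n :: nat assume n: "n \<ge> 1"
    have "Hq \<alpha> r n \<le> Hq \<alpha> r' n" unfolding Hq_def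
      using gf_mono_r[of "real n / \<alpha>" r r' n] a rr by (intro divide_right_mono) auto
    then show "root n (Hq \<alpha> r n) \<le> root n (Hq \<alpha> r' n)" using n by (intro real_root_le_mono) auto
  qed
qed

lemma gf_mono_m:
  assumes "0 \<le> m" "m \<le> m'"
  shows "gf n m r \<le> gf n m' r"
  unfolding gf_def Gf_def by (rule sum_mono) (use assms in \<open>auto intro: power_mono\<close>)

definition hlim :: "real \<Rightarrow> real" where
  "hlim \<alpha> = (SUP r\<in>{1..}. hr \<alpha> r)"

lemma hr_bdd: "\<alpha> > 0 \<Longrightarrow> bdd_above (hr \<alpha> ` {1..})"
  by (rule bdd_aboveI[of _ "exp (1 + \<alpha>) / \<alpha>"]) (auto intro: hr_bound)

lemma hr_le_hlim: "\<alpha> > 0 \<Longrightarrow> r \<ge> 1 \<Longrightarrow> hr \<alpha> r \<le> hlim \<alpha>"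
  unfolding hlim_def by (rule cSUP_upper[OF _ hr_bdd]) auto

lemma hlim_pos: "\<alpha> > 0 \<Longrightarrow> hlim \<alpha> > 0"
  using hr_le_hlim[of \<alpha> 1] hr_pos[of \<alpha> 1] by linarith

lemma hlim_tendsto:
  assumes a: "\<alpha> > 0"
  shows "((\<lambda>r. hr \<alpha> r) \<longlongrightarrow> hlim \<alpha>) at_top"
proof (rule order_tendstoI)
  fix y assume "y > hlim \<alpha>"
  then show "eventually (\<lambda>r. hr \<alpha> r < y) at_top"
    using hr_le_hlim[OF a] unfolding eventually_at_top_linorder
    by (intro exI[of _ 1]) (meson le_less_trans)
next
  fix y assume "y < hlim \<alpha>"
  then obtain r0 where r0: "r0 \<ge> 1" "y < hr \<alpha> r0"
    unfolding hlim_def using less_cSUP_iff[OF _ hr_bdd[OF a]] by auto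
  show "eventually (\<lambda>r. y < hr \<alpha> r) at_top"
    unfolding eventually_at_top_linorder
  proof (intro exI[of _ r0] allI impI)
    fix r assume "r \<ge> r0"
    then show "y < hr \<alpha> r" using hr_mono[OF a r0(1)] r0 by (meson less_le_trans)
  qed
qed

definition Rf :: "real \<Rightarrow> nat \<Rightarrow> real" where
  "Rf \<alpha> n = gf n (real n / \<alpha> - 1) (real n) / fact n"

definition Rr :: "real \<Rightarrow> real \<Rightarrow> nat \<Rightarrow> real" where
  "Rr \<alpha> r n = gf n (real n / \<alpha> - 1) r / fact n"

lemma Rr_lower:
  assumes a: "\<alpha> > 0" and n: "real n > \<alpha>"
  shows "(1 - \<alpha> / real n) ^ n * Hq \<alpha> r n \<le> Rr \<alpha> r n"
proof -
  have n0: "real n > 0" using a n by linarith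
  have m: "0 \<le> real n / \<alpha> - 1" "real n / \<alpha> - 1 \<le> real n / \<alpha>" "real n / \<alpha> > 0"
    using a n n0 by (auto simp: field_simps)
  have eq: "(real n / \<alpha> - 1) / (real n / \<alpha>) = 1 - \<alpha> / real n" using a n0 by (simp add: field_simps)
  have "(1 - \<alpha> / real n) ^ n * gf n (real n / \<alpha>) r \<le> gf n (real n / \<alpha> - 1) r"
    using gf_scale[OF m] unfolding eq .
  then show ?thesis unfolding Hq_def Rr_def by (simp add: divide_right_mono)
qed

lemma root_Rr_lower:
  assumes a: "\<alpha> > 0" and n: "real n > \<alpha>" and r: "r \<ge> 1"
  shows "(1 - \<alpha> / real n) * root n (Hq \<alpha> r n) \<le> root n (Rr \<alpha> r n)"
proof -
  have n1: "n \<ge> 1" using a n by (cases n) auto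
  have q: "0 \<le> 1 - \<alpha> / real n" using a n by (simp add: field_simps)
  have "root n ((1 - \<alpha> / real n) ^ n * Hq \<alpha> r n) = (1 - \<alpha> / real n) * root n (Hq \<alpha> r n)"
    using n1 q by (simp add: real_root_mult real_root_power_cancel)
  moreover have "root n ((1 - \<alpha> / real n) ^ n * Hq \<alpha> r n) \<le> root n (Rr \<alpha> r n)"
    using Rr_lower[OF a n] n1 by (intro real_root_le_mono) auto
  ultimately show ?thesis by simp
qed

lemma lower_tendsto:
  assumes a: "\<alpha> > 0" and r: "r \<ge> 1"
  shows "(\<lambda>n. (1 - \<alpha> / real n) * root n (Hq \<alpha> r n)) \<longlonglongrightarrow> hr \<alpha> r"
proof -
  have "(\<lambda>n. 1 - \<alpha> / real n) \<longlonglongrightarrow> 1 - 0"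
    by (intro tendsto_diff tendsto_const tendsto_divide_0[OF tendsto_const]
        filterlim_at_top_imp_at_infinity[OF filterlim_real_sequentially])
  from tendsto_mult[OF this hr_props(1)[OF a r]] show ?thesis by simp
qed

lemma Rf_tendsto:
  assumes a: "\<alpha> > 0"
  shows "(\<lambda>n. root n (Rf \<alpha> n)) \<longlonglongrightarrow> hlim \<alpha>"
proof (rule order_tendstoI)
  fix y assume y: "y > hlim \<alpha>"
  obtain N :: nat where N: "real N > \<alpha>" using reals_Archimedean2 by blast
  show "eventually (\<lambda>n. root n (Rf \<alpha> n) < y) sequentially"
    unfolding eventually_sequentially
  proof (intro exI[of _ N] allI impI)
    fix n assume "n \<ge> N"
    then have n: "real n > \<alpha>" using N by linarith
    have n1: "n \<ge> 1" using a n by (cases n) auto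
    have rn: "real n \<ge> 1" using n1 by simp
    have "Rf \<alpha> n \<le> Hq \<alpha> (real n) n" unfolding Rf_def Hq_def
      using gf_mono_m[of "real n / \<alpha> - 1" "real n / \<alpha>"] a n
      by (intro divide_right_mono) (auto simp: field_simps)
    also have "Hq \<alpha> (real n) n = root n (Hq \<alpha> (real n) n) ^ n"
      using n1 Hq_pos[OF a rn n1] by simp
    also have "\<dots> \<le> hlim \<alpha> ^ n"
      using hr_props(2)[OF a rn n1] hr_le_hlim[OF a rn] Hq_pos[OF a rn n1] n1
      by (intro power_mono) auto
    finally have "root n (Rf \<alpha> n) \<le> root n (hlim \<alpha> ^ n)" using n1 by (intro real_root_le_mono) auto
    also have "\<dots> = hlim \<alpha>" using n1 hlim_pos[OF a] by (intro real_root_power_cancel) auto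
    finally show "root n (Rf \<alpha> n) < y" using y by linarith
  qed
next
  fix y assume y: "y < hlim \<alpha>"
  obtain r where r: "r \<ge> 1" "y < hr \<alpha> r"
    using y unfolding hlim_def using less_cSUP_iff[OF _ hr_bdd[OF a]] by auto
  have ev1: "eventually (\<lambda>n. y < (1 - \<alpha> / real n) * root n (Hq \<alpha> r n)) sequentially"
    using lower_tendsto[OF a r(1)] r(2) by (rule order_tendstoD)
  obtain N :: nat where N: "real N > max \<alpha> r" using reals_Archimedean2 by blast
  have ev2: "eventually (\<lambda>n. (1 - \<alpha> / real n) * root n (Hq \<alpha> r n) \<le> root n (Rf \<alpha> n)) sequentially"
    unfolding eventually_sequentially
  proof (intro exI[of _ N] allI impI)
    fix n assume "n \<ge> N"
    then have n: "real n > \<alpha>" "real n > r" using N by auto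
    have n1: "n \<ge> 1" using a n by (cases n) auto
    have "Rr \<alpha> r n \<le> Rf \<alpha> n" unfolding Rr_def Rf_def
      using gf_mono_r[of "real n / \<alpha> - 1" r "real n" n] a n
      by (intro divide_right_mono) (auto simp: field_simps)
    then have "root n (Rr \<alpha> r n) \<le> root n (Rf \<alpha> n)" using n1 by (intro real_root_le_mono) auto
    then show "(1 - \<alpha> / real n) * root n (Hq \<alpha> r n) \<le> root n (Rf \<alpha> n)"
      using root_Rr_lower[OF a n(1) r(1)] by linarith
  qed
  show "eventually (\<lambda>n. y < root n (Rf \<alpha> n)) sequentially"
    using ev1 ev2 by eventually_elim linarith
qed

definition wsum :: "nat \<Rightarrow> real \<Rightarrow> (nat set set \<Rightarrow> bool) \<Rightarrow> real" where
  "wsum n x Q = (\<Sum>E\<in>{E. E \<subseteq> all_pairs n \<and> Q E}. x ^ card E)"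

lemma all_pairs_finite: "finite (all_pairs n)"
  unfolding all_pairs_eq by (simp add: pairs_finite)

lemma Gnp_eq:
  assumes q: "p < 1"
  shows "Gnp_prob n p Q = (1 - p) ^ card (all_pairs n) * wsum n (p / (1 - p)) Q"
  unfolding Gnp_prob_def wsum_def sum_distrib_left
proof (rule sum.cong[OF refl])
  fix E assume "E \<in> {E. E \<subseteq> all_pairs n \<and> Q E}"
  then have "card E \<le> card (all_pairs n)" using all_pairs_finite by (auto intro: card_mono)
  then show "p ^ card E * (1 - p) ^ (card (all_pairs n) - card E) =
        (1 - p) ^ card (all_pairs n) * (p / (1 - p)) ^ card E"
    using q by (simp add: power_diff power_divide)
qed

lemma wsum_mono:
  assumes "x \<ge> 0" "\<And>E. E \<subseteq> all_pairs n \<Longrightarrow> Q E \<Longrightarrow> Q' E"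
  shows "wsum n x Q \<le> wsum n x Q'"
  unfolding wsum_def
  by (rule sum_mono2) (use assms all_pairs_finite in \<open>auto intro: finite_subset\<close>)

lemma wsum_nonneg: "x \<ge> 0 \<Longrightarrow> wsum n x Q \<ge> 0"
  unfolding wsum_def by (intro sum_nonneg) auto

lemma component_reach:
  assumes "E \<subseteq> all_pairs n" "v \<in> {1..n}"
  shows "component n E v = reach E v"
proof -
  have EP: "E \<subseteq> pairs {1..n}" using assms(1) all_pairs_eq by simp
  have "w \<in> {1..n}" if "(adj E)\<^sup>*\<^sup>* v w" for w using reach_in[OF EP assms(2) that] .
  then show ?thesis unfolding component_def reach_def by blast
qed

lemma eventB_smallc:
  assumes "E \<subseteq> all_pairs n"
  shows "event_B n r E \<longleftrightarrow> smallc {1..n} r E"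
  unfolding event_B_def smallc_def using component_reach[OF assms] by simp

lemma wsum_forest_eq:
  assumes x: "x > 0"
  shows "(\<Sum>F\<in>forests {1..n} r. x ^ card F) = x ^ n * gf n (1 / x) r"
  unfolding gf_def Gf_def sum_distrib_left
proof (rule sum.cong[OF refl])
  fix F assume "F \<in> forests {1..n} r"
  then have "card F \<le> n" using forest_card_le[of "{1..n}" F] unfolding forests_def by auto
  then show "x ^ card F = x ^ n * (1 / x) ^ (card {1..n} - card F)"
    using x by (simp add: power_diff power_one_over)
qed

lemma wsum_L:
  assumes x: "x > 0"
  shows "wsum n x event_L = x ^ n * gf n (1 / x) (real n)"
proof -
  have "{E. E \<subseteq> all_pairs n \<and> event_L E} = forests {1..n} (real n)"
    using forests_full[of "{1..n}" "real n"]
    unfolding forests_all_def event_L_def all_pairs_eq by simp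
  then show ?thesis unfolding wsum_def using wsum_forest_eq[OF x] by simp
qed

lemma wsum_B:
  assumes x: "x > 0"
  shows "x ^ n * gf n (1 / x) r \<le> wsum n x (event_B n r)"
proof -
  have "forests {1..n} r \<subseteq> {E. E \<subseteq> all_pairs n \<and> event_B n r E}"
    unfolding forests_def using eventB_smallc all_pairs_eq by auto
  then have "(\<Sum>F\<in>forests {1..n} r. x ^ card F) \<le> wsum n x (event_B n r)"
    unfolding wsum_def
    by (intro sum_mono2) (use x all_pairs_finite in \<open>auto intro: finite_subset\<close>)
  then show ?thesis using wsum_forest_eq[OF x] by simp
qed

definition cn :: "real \<Rightarrow> nat \<Rightarrow> real" where
  "cn \<alpha> n = (1 - \<alpha> / real n) ^ card (all_pairs n) * (\<alpha> / (real n - \<alpha>)) ^ n * fact n"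

lemma P_L_eq:
  assumes a: "\<alpha> > 0" and n: "real n > \<alpha>"
  shows "P_na n \<alpha> event_L = cn \<alpha> n * Rf \<alpha> n"
proof -
  have n0: "real n > 0" using a n by linarith
  have p: "\<alpha> / real n < 1" using n n0 by (simp add: divide_less_eq)
  have x: "(\<alpha> / real n) / (1 - \<alpha> / real n) = \<alpha> / (real n - \<alpha>)" using n0 by (simp add: field_simps)
  have xpos: "\<alpha> / (real n - \<alpha>) > 0" using a n by simp
  have inv: "1 / (\<alpha> / (real n - \<alpha>)) = real n / \<alpha> - 1" using a n0 by (simp add: field_simps)
  show ?thesis
    unfolding P_na_def Gnp_eq[OF p] x wsum_L[OF xpos] inv cn_def Rf_def by simp
qed

lemma P_B_ge:
  assumes a: "\<alpha> > 0" and n: "real n > \<alpha>"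
  shows "cn \<alpha> n * Rr \<alpha> r n \<le> P_na n \<alpha> (event_B n r)"
proof -
  have n0: "real n > 0" using a n by linarith
  have p: "\<alpha> / real n < 1" using n n0 by (simp add: divide_less_eq)
  have x: "(\<alpha> / real n) / (1 - \<alpha> / real n) = \<alpha> / (real n - \<alpha>)" using n0 by (simp add: field_simps)
  have xpos: "\<alpha> / (real n - \<alpha>) > 0" using a n by simp
  have inv: "1 / (\<alpha> / (real n - \<alpha>)) = real n / \<alpha> - 1" using a n0 by (simp add: field_simps)
  have q: "(1 - \<alpha> / real n) ^ card (all_pairs n) \<ge> 0" using p by simp
  show ?thesis
    unfolding P_na_def Gnp_eq[OF p] x cn_def Rr_def
    using mult_left_mono[OF wsum_B[OF xpos, of n r] q] inv by simp
qed

lemma P_mono: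
  assumes a: "\<alpha> \<ge> 0" and n: "real n > \<alpha>" and Q: "\<And>E. E \<subseteq> all_pairs n \<Longrightarrow> Q E \<Longrightarrow> Q' E"
  shows "P_na n \<alpha> Q \<le> P_na n \<alpha> Q'"
proof -
  have n0: "real n > 0" using a n by linarith
  have p: "\<alpha> / real n < 1" using n n0 by (simp add: divide_less_eq)
  have q: "(1 - \<alpha> / real n) ^ card (all_pairs n) \<ge> 0" using p by simp
  have x: "\<alpha> / real n / (1 - \<alpha> / real n) \<ge> 0" using p a n0 by simp
  show ?thesis unfolding P_na_def Gnp_eq[OF p]
    by (rule mult_left_mono[OF wsum_mono[OF x Q] q])
qed

lemma P_nonneg:
  assumes a: "\<alpha> \<ge> 0" and n: "real n > \<alpha>"
  shows "P_na n \<alpha> Q \<ge> 0"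
proof -
  have n0: "real n > 0" using a n by linarith
  have p: "\<alpha> / real n < 1" using n n0 by (simp add: divide_less_eq)
  have x: "\<alpha> / real n / (1 - \<alpha> / real n) \<ge> 0" using p a n0 by simp
  show ?thesis unfolding P_na_def Gnp_eq[OF p] using wsum_nonneg[OF x] p by simp
qed

lemma adj_sym: "adj F a b \<longleftrightarrow> adj F b a"
  unfolding adj_def by (simp add: insert_commute)

lemma rtr_sym:
  assumes "(adj F)\<^sup>*\<^sup>* a b"
  shows "(adj F)\<^sup>*\<^sup>* b a"
  using assms
proof (induction rule: rtranclp_induct)
  case base then show ?case by simp
next
  case (step y z)
  have "adj F z y" using step.hyps(2) adj_sym by blast
  then show ?case using step.IH by (rule converse_rtranclp_into_rtranclp)
qed

lemma mod_contra:
  fixes i L :: nat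
  assumes "i < L" "L \<ge> 3" "((i + 1) mod L + 1) mod L = i"
  shows False
proof (cases "i + 1 < L")
  case True
  then have a: "(i + 1) mod L = i + 1" by simp
  show False
  proof (cases "i + 2 < L")
    case True
    then show False using assms(3) a by simp
  next
    case False
    then have "i + 2 = L" using \<open>i + 1 < L\<close> by linarith
    then have "(i + 2) mod L = 0" by simp
    then show False using assms a \<open>i + 2 = L\<close> by simp
  qed
next
  case False
  then have "i + 1 = L" using assms(1) by linarith
  then have "(i + 1) mod L = 0" by simp
  then have "i = 1 mod L" using assms(3) by simp
  then show False using assms(2) \<open>i + 1 = L\<close> by simp
qed

lemma cycle_path:
  assumes nc: "\<not> has_cycle F" and L3: "length vs \<ge> 3" and d: "distinct vs"
    and E: "\<forall>i < length vs. {vs ! i, vs ! ((i + 1) mod length vs)} \<in> insert e F"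
    and e: "e = {u, v}"
  shows "(adj F)\<^sup>*\<^sup>* u v"
proof -
  define L where "L = length vs"
  have L: "L \<ge> 3" using L3 L_def by simp
  define ed where "ed i = {vs ! i, vs ! ((i + 1) mod L)}" for i
  obtain i where i: "i < L" "ed i \<notin> F"
  proof (rule ccontr)
    assume "\<not> thesis"
    then have "\<forall>i < L. ed i \<in> F" using that by blast
    then have "has_cycle F" unfolding has_cycle_def using L3 d unfolding ed_def L_def by blast
    then show False using nc by simp
  qed
  have edi: "ed i = e" using E i unfolding ed_def L_def by blast
  have ml: "a mod L < L" for a using L by simp
  have claim: "(adj F)\<^sup>*\<^sup>* (vs ! ((i + 1) mod L)) (vs ! ((i + 1 + k) mod L))" if "k \<le> L - 1" for k
    using that
  proof (induction k)
    case 0 then show ?case by simp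
  next
    case (Suc k)
    define j where "j = (i + 1 + k) mod L"
    have kL: "k < L - 1" using Suc.prems by simp
    have jl: "j < L" unfolding j_def using ml .
    have jni: "j \<noteq> i"
    proof
      assume ji: "j = i"
      show False
      proof (cases "i + 1 + k < L")
        case True
        then show False using ji unfolding j_def by simp
      next
        case False
        then have "j = i + 1 + k - L" unfolding j_def using i(1) kL L
          by (simp add: le_mod_geq)
        then show False using ji kL False by linarith
      qed
    qed
    have "ed j \<in> insert e F" using E jl unfolding ed_def L_def by blast
    moreover have "ed j \<noteq> e"
    proof
      assume "ed j = e"
      then have eq: "{vs ! j, vs ! ((j + 1) mod L)} = {vs ! i, vs ! ((i + 1) mod L)}"
        using edi unfolding ed_def by simp
      have dd: "a < L \<Longrightarrow> b < L \<Longrightarrow> vs ! a = vs ! b \<Longrightarrow> a = b" for a b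
        using d nth_eq_iff_index_eq unfolding L_def by blast
      from eq have "vs ! j = vs ! i \<or> (vs ! j = vs ! ((i + 1) mod L) \<and> vs ! ((j + 1) mod L) = vs ! i)"
        by (auto simp: doubleton_eq_iff)
      then show False
      proof
        assume "vs ! j = vs ! i"
        then show False using dd[OF jl i(1)] jni by blast
      next
        assume h: "vs ! j = vs ! ((i + 1) mod L) \<and> vs ! ((j + 1) mod L) = vs ! i"
        then have "j = (i + 1) mod L" using dd[OF jl ml] by blast
        moreover have "(j + 1) mod L = i" using h dd[OF ml i(1)] by blast
        ultimately show False using mod_contra[OF i(1) L] by simp
      qed
    qed
    ultimately have "ed j \<in> F" by blast
    then have "adj F (vs ! j) (vs ! ((j + 1) mod L))" unfolding ed_def adj_def .
    moreover have "(j + 1) mod L = (i + 1 + Suc k) mod L" unfolding j_def by (simp add: mod_Suc_eq)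
    ultimately have "adj F (vs ! ((i + 1 + k) mod L)) (vs ! ((i + 1 + Suc k) mod L))"
      unfolding j_def by simp
    with Suc.IH[OF less_imp_le[OF kL]] show ?case by (rule rtranclp.rtrancl_into_rtrancl)
  qed
  have "(i + 1 + (L - 1)) mod L = i" using i(1) L by simp
  then have p: "(adj F)\<^sup>*\<^sup>* (vs ! ((i + 1) mod L)) (vs ! i)" using claim[of "L - 1"] by simp
  have "{u, v} = {vs ! i, vs ! ((i + 1) mod L)}" using edi e unfolding ed_def by simp
  then have "(u = vs ! i \<and> v = vs ! ((i + 1) mod L)) \<or> (u = vs ! ((i + 1) mod L) \<and> v = vs ! i)"
    by (auto simp: doubleton_eq_iff)
  then show ?thesis using p rtr_sym by blast
qed

definition maxf :: "nat set set \<Rightarrow> nat set set" where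
  "maxf E = (SOME F. F \<subseteq> E \<and> \<not> has_cycle F \<and> (\<forall>F'. F' \<subseteq> E \<and> \<not> has_cycle F' \<longrightarrow> card F' \<le> card F))"

lemma maxf_props:
  assumes fin: "finite E"
  shows "maxf E \<subseteq> E" "\<not> has_cycle (maxf E)"
    "\<And>F'. F' \<subseteq> E \<Longrightarrow> \<not> has_cycle F' \<Longrightarrow> card F' \<le> card (maxf E)"
proof -
  define A where "A = {F. F \<subseteq> E \<and> \<not> has_cycle F}"
  have finA: "finite A" unfolding A_def using fin by simp
  have "{} \<in> A" unfolding A_def using no_cycle_empty by simp
  then have "Max (card ` A) \<in> card ` A" using finA by (intro Max_in) auto
  then obtain F0 where F0: "F0 \<in> A" "card F0 = Max (card ` A)" by auto
  have "F0 \<subseteq> E \<and> \<not> has_cycle F0 \<and> (\<forall>F'. F' \<subseteq> E \<and> \<not> has_cycle F' \<longrightarrow> card F' \<le> card F0)"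
    using F0 finA unfolding A_def by auto
  then have "maxf E \<subseteq> E \<and> \<not> has_cycle (maxf E) \<and>
      (\<forall>F'. F' \<subseteq> E \<and> \<not> has_cycle F' \<longrightarrow> card F' \<le> card (maxf E))"
    unfolding maxf_def by (rule someI)
  then show "maxf E \<subseteq> E" "\<not> has_cycle (maxf E)"
    "\<And>F'. F' \<subseteq> E \<Longrightarrow> \<not> has_cycle F' \<Longrightarrow> card F' \<le> card (maxf E)" by auto
qed

lemma maxf_span:
  assumes fin: "finite E" and eE: "{u, v} \<in> E"
  shows "(adj (maxf E))\<^sup>*\<^sup>* u v"
proof (cases "{u, v} \<in> maxf E")
  case True
  then show ?thesis unfolding adj_def by blast
next
  case False
  have "insert {u, v} (maxf E) \<subseteq> E" using maxf_props(1)[OF fin] eE by blast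
  moreover have finM: "finite (maxf E)" by (rule finite_subset[OF maxf_props(1)[OF fin] fin])
  have cc: "card (insert {u, v} (maxf E)) = Suc (card (maxf E))"
    by (rule card_insert_disjoint[OF finM False])
  have "has_cycle (insert {u, v} (maxf E))"
  proof (rule ccontr)
    assume "\<not> has_cycle (insert {u, v} (maxf E))"
    then have "card (insert {u, v} (maxf E)) \<le> card (maxf E)"
      using maxf_props(3)[OF fin] \<open>insert {u, v} (maxf E) \<subseteq> E\<close> by blast
    then show False using cc by simp
  qed
  then obtain vs where "length vs \<ge> 3" "distinct vs"
    "\<forall>i < length vs. {vs ! i, vs ! ((i + 1) mod length vs)} \<in> insert {u, v} (maxf E)"
    unfolding has_cycle_def by blast
  then show ?thesis using cycle_path[OF maxf_props(2)[OF fin]] by blast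
qed

definition Wf :: "nat \<Rightarrow> nat set set \<Rightarrow> nat set set" where
  "Wf n F = {e \<in> all_pairs n. \<exists>a b. e = {a, b} \<and> (adj F)\<^sup>*\<^sup>* a b}"

lemma Wf_card:
  assumes EA: "E \<subseteq> all_pairs n" and B: "event_B n r E" and FE: "F \<subseteq> E"
  shows "real (card (Wf n F)) \<le> real n * r"
proof -
  define S where "S = (SIGMA a:{1..n}. reach F a \<inter> {1..n})"
  have finS: "finite S" unfolding S_def by simp
  have "Wf n F \<subseteq> (\<lambda>(a, b). {a, b}) ` S"
  proof
    fix e assume "e \<in> Wf n F"
    then obtain a b where e: "e \<in> all_pairs n" "e = {a, b}" "(adj F)\<^sup>*\<^sup>* a b" unfolding Wf_def by blast
    then have "a \<in> {1..n}" "b \<in> {1..n}" unfolding all_pairs_def by auto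
    then have "(a, b) \<in> S" unfolding S_def reach_def using e by auto
    then show "e \<in> (\<lambda>(a, b). {a, b}) ` S" using e by force
  qed
  then have "card (Wf n F) \<le> card ((\<lambda>(a, b). {a, b}) ` S)" by (rule card_mono[rotated]) (use finS in simp)
  also have "\<dots> \<le> card S" by (rule card_image_le[OF finS])
  also have "\<dots> = (\<Sum>a\<in>{1..n}. card (reach F a \<inter> {1..n}))" unfolding S_def by (rule card_SigmaI) auto
  finally have c1: "real (card (Wf n F)) \<le> (\<Sum>a\<in>{1..n}. real (card (reach F a \<inter> {1..n})))"
    by (simp add: of_nat_sum[symmetric] del: of_nat_sum)
  have "real (card (reach F a \<inter> {1..n})) \<le> r" if a: "a \<in> {1..n}" for a
  proof -
    have "reach F a \<inter> {1..n} \<subseteq> component n E a"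
      unfolding reach_def component_def using adj_mono[OF FE] by blast
    then have "card (reach F a \<inter> {1..n}) \<le> card (component n E a)"
      by (rule card_mono[rotated]) (simp add: component_def)
    moreover have "real (card (component n E a)) \<le> r" using B a unfolding event_B_def by blast
    ultimately show ?thesis by linarith
  qed
  then have "(\<Sum>a\<in>{1..n}. real (card (reach F a \<inter> {1..n}))) \<le> real (card {1..n}) * r"
    by (rule sum_bounded_above)
  then show ?thesis using c1 by simp
qed

lemma wsum_B_le:
  assumes x: "x > 0" and r: "r \<ge> 0"
  shows "wsum n x (event_B n r) \<le> exp (x * (real n * r)) * wsum n x event_L"
proof -
  define D where "D = {E. E \<subseteq> all_pairs n \<and> event_B n r E}"
  define Ls where "Ls = {F. F \<subseteq> all_pairs n \<and> \<not> has_cycle F \<and> real (card (Wf n F)) \<le> real n * r}"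
  define T where "T = (SIGMA F:Ls. Pow (Wf n F))"
  define g where "g E = (maxf E, E - maxf E)" for E
  have finAP: "finite (all_pairs n)" by (rule all_pairs_finite)
  have finE: "finite E" if "E \<in> D" for E using that finAP unfolding D_def by (auto intro: finite_subset)
  have inj: "inj_on g D"
  proof (rule inj_onI)
    fix E1 E2 assume "E1 \<in> D" "E2 \<in> D" "g E1 = g E2"
    then have h: "maxf E1 = maxf E2" "E1 - maxf E1 = E2 - maxf E2" unfolding g_def by auto
    have "E1 = maxf E1 \<union> (E1 - maxf E1)" using maxf_props(1)[OF finE[OF \<open>E1 \<in> D\<close>]] by blast
    also have "\<dots> = maxf E2 \<union> (E2 - maxf E2)" using h by simp
    also have "\<dots> = E2" using maxf_props(1)[OF finE[OF \<open>E2 \<in> D\<close>]] by blast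
    finally show "E1 = E2" .
  qed
  have gT: "g ` D \<subseteq> T"
  proof
    fix y assume "y \<in> g ` D"
    then obtain E where E: "E \<in> D" "y = g E" by blast
    have EA: "E \<subseteq> all_pairs n" and B: "event_B n r E" using E unfolding D_def by auto
    note mp = maxf_props[OF finE[OF E(1)]]
    have "maxf E \<in> Ls" unfolding Ls_def using mp EA Wf_card[OF EA B mp(1)] by auto
    moreover have "E - maxf E \<subseteq> Wf n (maxf E)"
    proof
      fix e assume e: "e \<in> E - maxf E"
      then have "e \<in> all_pairs n" using EA by blast
      then obtain a b where ab: "e = {a, b}" unfolding all_pairs_def using card2_eq by blast
      have "(adj (maxf E))\<^sup>*\<^sup>* a b" using maxf_span[OF finE[OF E(1)]] e ab by blast
      then show "e \<in> Wf n (maxf E)" unfolding Wf_def using \<open>e \<in> all_pairs n\<close> ab by blast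
    qed
    ultimately show "y \<in> T" unfolding T_def E(2) g_def by blast
  qed
  have finLs: "finite Ls" unfolding Ls_def using finAP by (auto intro: finite_subset[of _ "Pow (all_pairs n)"])
  have finW: "finite (Wf n F)" for F unfolding Wf_def using finAP by simp
  have finT: "finite T" unfolding T_def using finLs finW by simp
  have "wsum n x (event_B n r) = (\<Sum>E\<in>D. x ^ (card (maxf E) + card (E - maxf E)))"
    unfolding wsum_def D_def[symmetric]
  proof (rule sum.cong[OF refl])
    fix E assume "E \<in> D"
    have "card E = card (maxf E) + card (E - maxf E)"
      using maxf_props(1)[OF finE[OF \<open>E \<in> D\<close>]] finE[OF \<open>E \<in> D\<close>]
      by (metis card_Diff_subset card_mono finite_subset le_add_diff_inverse)
    then show "x ^ card E = x ^ (card (maxf E) + card (E - maxf E))" by simp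
  qed
  also have "\<dots> = (\<Sum>y\<in>g ` D. x ^ (card (fst y) + card (snd y)))"
    by (subst sum.reindex[OF inj]) (simp add: g_def)
  also have "\<dots> \<le> (\<Sum>y\<in>T. x ^ (card (fst y) + card (snd y)))"
    by (rule sum_mono2[OF finT gT]) (use x in simp)
  also have "\<dots> = (\<Sum>F\<in>Ls. \<Sum>S\<in>Pow (Wf n F). x ^ (card F + card S))"
    unfolding T_def by (subst sum.Sigma) (use finLs finW in \<open>auto simp: case_prod_beta\<close>)
  also have "\<dots> = (\<Sum>F\<in>Ls. x ^ card F * (1 + x) ^ card (Wf n F))"
    by (rule sum.cong[OF refl])
      (simp add: power_add sum_distrib_left[symmetric] sum_pow_card_Pow[OF finW])
  also have "\<dots> \<le> (\<Sum>F\<in>Ls. x ^ card F * exp (x * (real n * r)))"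
  proof (rule sum_mono)
    fix F assume "F \<in> Ls"
    then have cw: "real (card (Wf n F)) \<le> real n * r" unfolding Ls_def by simp
    have "(1 + x) ^ card (Wf n F) \<le> exp x ^ card (Wf n F)"
      using x by (intro power_mono) (auto simp: add.commute)
    also have "\<dots> = exp (real (card (Wf n F)) * x)" by (simp add: exp_of_nat_mult)
    also have "\<dots> \<le> exp (x * (real n * r))" using cw x by (simp add: mult.commute mult_left_mono)
    finally show "x ^ card F * (1 + x) ^ card (Wf n F) \<le> x ^ card F * exp (x * (real n * r))"
      using x by (intro mult_left_mono) auto
  qed
  also have "\<dots> = exp (x * (real n * r)) * (\<Sum>F\<in>Ls. x ^ card F)"
    by (simp add: sum_distrib_right mult.commute)
  also have "\<dots> \<le> exp (x * (real n * r)) * wsum n x event_L"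
  proof (rule mult_left_mono)
    show "(\<Sum>F\<in>Ls. x ^ card F) \<le> wsum n x event_L"
      unfolding wsum_def Ls_def event_L_def
      by (rule sum_mono2) (use finAP x in \<open>auto intro: finite_subset[of _ "Pow (all_pairs n)"]\<close>)
  qed simp
  finally show ?thesis .
qed

lemma fact_upper:
  assumes "n \<ge> 1"
  shows "fact n \<le> exp 1 * real n ^ (n + 1) / exp (real n)"
  using assms
proof (induction n rule: dec_induct)
  case base then show ?case by simp
next
  case (step n)
  have n0: "real n > 0" using step.hyps by simp
  have l: "ln (1 + 1 / real n) \<ge> 1 / (real n + 1)"
  proof -
    have "ln (real n / (real n + 1)) \<le> real n / (real n + 1) - 1"
      using n0 by (intro ln_le_minus_one) auto
    moreover have "ln (real n / (real n + 1)) = - ln (1 + 1 / real n)"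
      using n0 by (simp add: ln_div field_simps)
    moreover have "real n / (real n + 1) - 1 = - (1 / (real n + 1))" using n0 by (simp add: field_simps)
    ultimately show ?thesis by linarith
  qed
  have "exp 1 \<le> (1 + 1 / real n) ^ (n + 1)"
  proof -
    have "1 \<le> real (n + 1) * ln (1 + 1 / real n)"
      using l n0 by (simp add: field_simps)
    then have "exp 1 \<le> exp (real (n + 1) * ln (1 + 1 / real n))" by simp
    also have "\<dots> = exp (ln (1 + 1 / real n)) ^ (n + 1)" by (rule exp_of_nat_mult)
    also have "\<dots> = (1 + 1 / real n) ^ (n + 1)"
    proof -
      have "1 + 1 / real n > 0" using n0 by (simp add: add_pos_pos)
      then show ?thesis by (simp only: exp_ln)
    qed
    finally show ?thesis .
  qed
  then have key: "exp 1 * real n ^ (n + 1) \<le> (real n + 1) ^ (n + 1)"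
    using n0 by (simp add: field_simps power_divide)
  have "fact (Suc n) = (real n + 1) * fact n" by simp
  also have "\<dots> \<le> (real n + 1) * (exp 1 * real n ^ (n + 1) / exp (real n))"
    using step.IH by (intro mult_left_mono) auto
  also have "\<dots> = (exp 1 * real n ^ (n + 1)) * (real n + 1) / exp (real n)" by simp
  also have "\<dots> \<le> (real n + 1) ^ (n + 1) * (real n + 1) / exp (real n)"
    using key by (intro divide_right_mono mult_right_mono) auto
  also have "\<dots> = exp 1 * real (Suc n) ^ (Suc n + 1) / exp (real (Suc n))"
    by (simp add: exp_add field_simps)
  finally show ?case .
qed

lemma root_fact_tendsto: "(\<lambda>n. root n (fact n) / real n) \<longlonglongrightarrow> exp (-1)"
proof (rule tendsto_sandwich[of "\<lambda>n. exp (-1)" _ _ "\<lambda>n. root n (exp 1) * root n (real n) * exp (-1)"])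
  show "eventually (\<lambda>n. exp (-1) \<le> root n (fact n) / real n) sequentially"
    unfolding eventually_sequentially
  proof (intro exI[of _ 1] allI impI)
    fix n :: nat assume n: "n \<ge> 1"
    have "real n ^ n / fact n \<le> exp (real n)" by (rule pow_fact_le_exp) simp
    then have "real n ^ n \<le> exp (real n) * fact n" by (simp add: divide_le_eq)
    then have "(real n * exp (-1)) ^ n \<le> fact n"
      by (simp add: power_mult_distrib exp_of_nat_mult[symmetric] exp_minus field_simps)
    then have "root n ((real n * exp (-1)) ^ n) \<le> root n (fact n)" using n by (intro real_root_le_mono) auto
    then have "real n * exp (-1) \<le> root n (fact n)" using n by (simp add: real_root_power_cancel)
    then show "exp (-1) \<le> root n (fact n) / real n" using n by (simp add: le_divide_eq mult.commute)
  qed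
  show "eventually (\<lambda>n. root n (fact n) / real n \<le> root n (exp 1) * root n (real n) * exp (-1)) sequentially"
    unfolding eventually_sequentially
  proof (intro exI[of _ 1] allI impI)
    fix n :: nat assume n: "n \<ge> 1"
    have "root n (fact n) \<le> root n (exp 1 * real n ^ (n + 1) / exp (real n))"
      using fact_upper[OF n] n by (intro real_root_le_mono) auto
    also have "exp 1 * real n ^ (n + 1) / exp (real n) = exp 1 * real n * (real n * exp (-1)) ^ n"
      by (simp add: power_mult_distrib exp_of_nat_mult[symmetric] exp_minus field_simps)
    also have "root n \<dots> = root n (exp 1) * root n (real n) * (real n * exp (-1))"
      using n by (simp add: real_root_mult real_root_power_cancel)
    finally show "root n (fact n) / real n \<le> root n (exp 1) * root n (real n) * exp (-1)"
      using n by (simp add: divide_le_eq field_simps)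
  qed
  show "(\<lambda>n. exp (-1)) \<longlonglongrightarrow> exp (-1)" by simp
  have "(\<lambda>n. root n (exp 1) * root n (real n) * exp (-1)) \<longlonglongrightarrow> 1 * 1 * exp (-1)"
    by (intro tendsto_mult LIMSEQ_root_const LIMSEQ_root tendsto_const) simp
  then show "(\<lambda>n. root n (exp 1) * root n (real n) * exp (-1)) \<longlonglongrightarrow> exp (-1)" by simp
qed

lemma card_all_pairs: "2 * real (card (all_pairs n)) = real n * (real n - 1)"
proof -
  have "card (all_pairs n) = n choose 2"
    unfolding all_pairs_def using n_subsets[of "{1..n}" 2] by simp
  then have "card (all_pairs n) = n * (n - 1) div 2" by (simp add: choose_two)
  moreover have "even (n * (n - 1))" by (cases "even n") auto
  ultimately have "2 * card (all_pairs n) = n * (n - 1)" by simp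
  then have "real (2 * card (all_pairs n)) = real (n * (n - 1))" by simp
  then show ?thesis by (cases n) (auto simp: algebra_simps)
qed

lemma nlog_tendsto:
  "(\<lambda>n. real n * ln (1 - \<alpha> / real n)) \<longlonglongrightarrow> - \<alpha>"
proof -
  have "(\<lambda>n. ln ((1 + (- \<alpha>) / real n) ^ n)) \<longlonglongrightarrow> ln (exp (- \<alpha>))"
    by (intro tendsto_ln tendsto_exp_limit_sequentially) simp
  then have t: "(\<lambda>n. ln ((1 + (- \<alpha>) / real n) ^ n)) \<longlonglongrightarrow> - \<alpha>" by simp
  obtain N :: nat where N: "real N > \<bar>\<alpha>\<bar>" using reals_Archimedean2 by blast
  show ?thesis
  proof (rule Lim_transform_eventually[OF t])
    show "eventually (\<lambda>n. ln ((1 + (- \<alpha>) / real n) ^ n) = real n * ln (1 - \<alpha> / real n)) sequentially"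
      unfolding eventually_sequentially
    proof (intro exI[of _ N] allI impI)
      fix n assume "n \<ge> N"
      then have n: "real n > \<bar>\<alpha>\<bar>" using N by linarith
      then have "1 - \<alpha> / real n > 0" by (simp add: field_simps abs_if split: if_splits)
      then show "ln ((1 + (- \<alpha>) / real n) ^ n) = real n * ln (1 - \<alpha> / real n)"
        by (simp add: ln_realpow)
    qed
  qed
qed

lemma root_cn_tendsto:
  assumes a: "\<alpha> > 0"
  shows "(\<lambda>n. root n (cn \<alpha> n)) \<longlonglongrightarrow> exp (- \<alpha> / 2) * \<alpha> * exp (-1)"
proof -
  define f where "f n = exp (((real n - 1) / real n / 2) * (real n * ln (1 - \<alpha> / real n))) *
      (\<alpha> / (1 - \<alpha> / real n)) * (root n (fact n) / real n)" for n
  have lim1: "(\<lambda>n. (real n - 1) / real n) \<longlonglongrightarrow> 1"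
  proof -
    have "(\<lambda>n. 1 - 1 / real n) \<longlonglongrightarrow> 1 - 0"
      by (intro tendsto_diff tendsto_const tendsto_divide_0[OF tendsto_const]
        filterlim_at_top_imp_at_infinity[OF filterlim_real_sequentially])
    then have "(\<lambda>n. 1 - 1 / real n) \<longlonglongrightarrow> 1" by simp
    then show ?thesis
      by (rule Lim_transform_eventually) (auto simp: eventually_sequentially field_simps intro!: exI[of _ 1])
  qed
  have lim2: "(\<lambda>n. 1 - \<alpha> / real n) \<longlonglongrightarrow> 1 - 0"
    by (intro tendsto_diff tendsto_const tendsto_divide_0[OF tendsto_const]
        filterlim_at_top_imp_at_infinity[OF filterlim_real_sequentially])
  have "f \<longlonglongrightarrow> exp ((1 / 2) * (- \<alpha>)) * (\<alpha> / (1 - 0)) * exp (-1)"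
    unfolding f_def
    by (intro tendsto_mult tendsto_exp tendsto_divide lim1 lim2 tendsto_const nlog_tendsto root_fact_tendsto) auto
  then have lf: "f \<longlonglongrightarrow> exp (- \<alpha> / 2) * \<alpha> * exp (-1)" by simp
  obtain N :: nat where N: "real N > \<alpha>" using reals_Archimedean2 by blast
  show ?thesis
  proof (rule Lim_transform_eventually[OF lf])
    show "eventually (\<lambda>n. f n = root n (cn \<alpha> n)) sequentially"
      unfolding eventually_sequentially
    proof (intro exI[of _ N] allI impI)
      fix n assume "n \<ge> N"
      then have n: "real n > \<alpha>" using N by linarith
      have n1: "n \<ge> 1" using n a by (cases n) auto
      have n0: "real n > 0" using n1 by simp
      define q where "q = 1 - \<alpha> / real n"
      have q0: "q > 0" unfolding q_def using n n0 by (simp add: field_simps)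
      define K where "K = card (all_pairs n)"
      have K: "real K = real n * (real n - 1) / 2" using card_all_pairs[of n] unfolding K_def by simp
      have r1: "root n (q ^ K) = exp (((real n - 1) / real n / 2) * (real n * ln q))"
      proof -
        have "root n (q ^ K) = exp (ln (q ^ K) / real n)" using root_exp_ln[OF n1] q0 by simp
        also have "ln (q ^ K) = real K * ln q" using q0 by (simp add: ln_realpow)
        finally show ?thesis unfolding K using n0 by (simp add: field_simps)
      qed
      have r2: "root n ((\<alpha> / (real n - \<alpha>)) ^ n) = \<alpha> / (real n - \<alpha>)"
        using n1 a n by (intro real_root_power_cancel) auto
      have r3: "\<alpha> / (real n - \<alpha>) * root n (fact n) = (\<alpha> / q) * (root n (fact n) / real n)"
        unfolding q_def using n0 n by (simp add: field_simps)
      have "root n (cn \<alpha> n) = root n (q ^ K) * root n ((\<alpha> / (real n - \<alpha>)) ^ n) * root n (fact n)"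
        unfolding cn_def q_def K_def by (simp add: real_root_mult)
      also have "\<dots> = f n" unfolding r1 r2 f_def using r3 q_def by (simp add: mult.assoc)
      finally show "f n = root n (cn \<alpha> n)" by simp
    qed
  qed
qed

lemma P_Beps_le:
  assumes a: "\<alpha> > 0" and n: "real n > \<alpha>" and e: "\<epsilon> \<ge> 0"
  shows "P_na n \<alpha> (event_B n (\<epsilon> * real n))
     \<le> exp (\<alpha> / (real n - \<alpha>) * (real n * (\<epsilon> * real n))) * P_na n \<alpha> event_L"
proof -
  have n0: "real n > 0" using a n by linarith
  have p: "\<alpha> / real n < 1" using n n0 by (simp add: divide_less_eq)
  have x: "(\<alpha> / real n) / (1 - \<alpha> / real n) = \<alpha> / (real n - \<alpha>)" using n0 by (simp add: field_simps)
  have xpos: "\<alpha> / (real n - \<alpha>) > 0" using a n by simp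
  have q: "(1 - \<alpha> / real n) ^ card (all_pairs n) \<ge> 0" using p by simp
  have r: "\<epsilon> * real n \<ge> 0" using e by simp
  show ?thesis
    unfolding P_na_def Gnp_eq[OF p] x
    using mult_left_mono[OF wsum_B_le[OF xpos r, of n] q] by (simp add: mult.left_commute)
qed

lemma root_Beps:
  assumes a: "\<alpha> > 0" and n: "real n \<ge> 2 * \<alpha> + 1" and e: "\<epsilon> \<ge> 0"
  shows "root n (P_na n \<alpha> (event_B n (\<epsilon> * real n))) \<le> exp (2 * \<alpha> * \<epsilon>) * root n (P_na n \<alpha> event_L)"
proof -
  have na: "real n > \<alpha>" using n a by linarith
  have n1: "n \<ge> 1" using n a by (cases n) auto
  have n0: "real n > 0" using n1 by simp
  define y where "y = \<alpha> / (real n - \<alpha>) * (real n * (\<epsilon> * real n))"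
  have "root n (P_na n \<alpha> (event_B n (\<epsilon> * real n))) \<le> root n (exp y * P_na n \<alpha> event_L)"
    using P_Beps_le[OF a na e] n1 unfolding y_def by (intro real_root_le_mono) auto
  also have "\<dots> = exp (y / real n) * root n (P_na n \<alpha> event_L)"
    using root_exp_ln[OF n1, of "exp y"] by (simp add: real_root_mult)
  also have "\<dots> \<le> exp (2 * \<alpha> * \<epsilon>) * root n (P_na n \<alpha> event_L)"
  proof (rule mult_right_mono)
    have "y / real n = \<alpha> * \<epsilon> * (real n / (real n - \<alpha>))" unfolding y_def using n0 na
      by (simp add: field_simps)
    also have "\<dots> \<le> \<alpha> * \<epsilon> * 2"
    proof (rule mult_left_mono)
      show "real n / (real n - \<alpha>) \<le> 2" using na n by (simp add: divide_le_eq)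
      show "0 \<le> \<alpha> * \<epsilon>" using a e by simp
    qed
    finally show "exp (y / real n) \<le> exp (2 * \<alpha> * \<epsilon>)" by (simp add: mult.commute mult.left_commute)
    show "0 \<le> root n (P_na n \<alpha> event_L)" using P_nonneg[of \<alpha> n] a na by (intro real_root_ge_zero) auto
  qed
  finally show ?thesis .
qed

lemma cn_nonneg:
  assumes a: "\<alpha> > 0" and n: "real n > \<alpha>"
  shows "cn \<alpha> n \<ge> 0"
proof -
  have "1 - \<alpha> / real n \<ge> 0" using a n by (simp add: field_simps)
  moreover have "\<alpha> / (real n - \<alpha>) \<ge> 0" using a n by simp
  ultimately show ?thesis unfolding cn_def by simp
qed

lemma eventB_mono: "r \<le> r' \<Longrightarrow> event_B n r E \<Longrightarrow> event_B n r' E"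
  unfolding event_B_def by force

lemma main_pos:
  fixes \<alpha> :: real
  assumes a: "\<alpha> > 0"
  shows "\<exists>l :: real.
     ((\<lambda>n. root n (P_na n \<alpha> event_L)) \<longlonglongrightarrow> l) \<and>
     ((\<lambda>r::real. liminf (\<lambda>n. ereal (root n (P_na n \<alpha> (event_B n r)))))
        \<longlongrightarrow> ereal l) at_top \<and>
     ((\<lambda>\<epsilon>::real. limsup (\<lambda>n. ereal (root n (P_na n \<alpha> (event_B n (\<epsilon> * real n))))))
        \<longlongrightarrow> ereal l) (at_right 0)"
proof -
  define A where "A = exp (- \<alpha> / 2) * \<alpha> * exp (-1)"
  define l where "l = A * hlim \<alpha>"
  obtain N0 :: nat where N0: "real N0 > 2 * \<alpha> + 1" using reals_Archimedean2 by blast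
  have bigN: "real n > \<alpha>" "n \<ge> 1" "real n \<ge> 2 * \<alpha> + 1" if "n \<ge> N0" for n
  proof -
    show "real n \<ge> 2 * \<alpha> + 1" using N0 that by linarith
    then show "real n > \<alpha>" using a by linarith
    show "n \<ge> 1" using \<open>real n \<ge> 2 * \<alpha> + 1\<close> a by (cases n) auto
  qed
  have limL: "(\<lambda>n. root n (P_na n \<alpha> event_L)) \<longlonglongrightarrow> l"
  proof -
    have "(\<lambda>n. root n (cn \<alpha> n) * root n (Rf \<alpha> n)) \<longlonglongrightarrow> l"
      unfolding l_def A_def using tendsto_mult[OF root_cn_tendsto[OF a] Rf_tendsto[OF a]] .
    then show ?thesis
    proof (rule Lim_transform_eventually)
      show "eventually (\<lambda>n. root n (cn \<alpha> n) * root n (Rf \<alpha> n) = root n (P_na n \<alpha> event_L)) sequentially"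
        unfolding eventually_sequentially
        using P_L_eq[OF a] bigN by (intro exI[of _ N0]) (auto simp: real_root_mult)
    qed
  qed
  define low where "low r n = root n (cn \<alpha> n) * ((1 - \<alpha> / real n) * root n (Hq \<alpha> r n))" for r n
  have lowlim: "low r \<longlonglongrightarrow> A * hr \<alpha> r" if "r \<ge> 1" for r
    unfolding low_def A_def using tendsto_mult[OF root_cn_tendsto[OF a] lower_tendsto[OF a that]] .
  have lowev: "eventually (\<lambda>n. low r n \<le> root n (P_na n \<alpha> (event_B n r))) sequentially"
    if r: "r \<ge> 1" for r
    unfolding eventually_sequentially
  proof (intro exI[of _ N0] allI impI)
    fix n assume "n \<ge> N0"
    note nn = bigN[OF this]
    have "low r n \<le> root n (cn \<alpha> n) * root n (Rr \<alpha> r n)"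
      unfolding low_def using root_Rr_lower[OF a nn(1) r] cn_nonneg[OF a nn(1)]
      by (intro mult_left_mono real_root_ge_zero) auto
    also have "\<dots> = root n (cn \<alpha> n * Rr \<alpha> r n)" by (simp add: real_root_mult)
    also have "\<dots> \<le> root n (P_na n \<alpha> (event_B n r))"
      using P_B_ge[OF a nn(1)] nn(2) by (intro real_root_le_mono) auto
    finally show "low r n \<le> root n (P_na n \<alpha> (event_B n r))" .
  qed
  have upev: "eventually (\<lambda>n. root n (P_na n \<alpha> (event_B n (\<epsilon> * real n)))
                \<le> exp (2 * \<alpha> * \<epsilon>) * root n (P_na n \<alpha> event_L)) sequentially"
    if e: "\<epsilon> \<ge> 0" for \<epsilon>
    unfolding eventually_sequentially
    using root_Beps[OF a _ e] bigN by (intro exI[of _ N0]) auto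
  have monoev: "eventually (\<lambda>n. root n (P_na n \<alpha> (event_B n r))
                \<le> root n (P_na n \<alpha> (event_B n (\<epsilon> * real n)))) sequentially"
    if e: "\<epsilon> > 0" for \<epsilon> r
  proof -
    obtain N1 :: nat where N1: "real N1 > r / \<epsilon>" using reals_Archimedean2 by blast
    show ?thesis unfolding eventually_sequentially
    proof (intro exI[of _ "max N0 N1"] allI impI)
      fix n assume n: "n \<ge> max N0 N1"
      note nn = bigN[of n]
      have "real n > r / \<epsilon>" using N1 n by linarith
      then have "r \<le> \<epsilon> * real n" using e by (simp add: divide_less_eq mult.commute)
      then have "P_na n \<alpha> (event_B n r) \<le> P_na n \<alpha> (event_B n (\<epsilon> * real n))"
        using a nn n by (intro P_mono) (auto intro: eventB_mono)
      then show "root n (P_na n \<alpha> (event_B n r)) \<le> root n (P_na n \<alpha> (event_B n (\<epsilon> * real n)))"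
        using nn n by (intro real_root_le_mono) auto
    qed
  qed
  define g where "g r = liminf (\<lambda>n. ereal (root n (P_na n \<alpha> (event_B n r))))" for r
  define k where "k \<epsilon> = limsup (\<lambda>n. ereal (root n (P_na n \<alpha> (event_B n (\<epsilon> * real n)))))" for \<epsilon>
  have glow: "ereal (A * hr \<alpha> r) \<le> g r" if r: "r \<ge> 1" for r
  proof -
    have "ereal (A * hr \<alpha> r) = liminf (\<lambda>n. ereal (low r n))"
      by (rule lim_imp_Liminf[symmetric]) (use lowlim[OF r] in auto)
    also have "\<dots> \<le> g r" unfolding g_def
      by (rule Liminf_mono) (use lowev[OF r] in \<open>auto elim: eventually_mono\<close>)
    finally show ?thesis .
  qed
  have kup: "k \<epsilon> \<le> ereal (exp (2 * \<alpha> * \<epsilon>) * l)" if e: "\<epsilon> \<ge> 0" for \<epsilon>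
  proof -
    have "k \<epsilon> \<le> limsup (\<lambda>n. ereal (exp (2 * \<alpha> * \<epsilon>) * root n (P_na n \<alpha> event_L)))"
      unfolding k_def by (rule Limsup_mono) (use upev[OF e] in \<open>auto elim: eventually_mono\<close>)
    also have "\<dots> = ereal (exp (2 * \<alpha> * \<epsilon>) * l)"
      by (rule lim_imp_Limsup) (use limL in \<open>auto intro: tendsto_mult tendsto_const\<close>)
    finally show ?thesis .
  qed
  have gk: "g r \<le> k \<epsilon>" if e: "\<epsilon> > 0" for r \<epsilon>
  proof -
    have "g r \<le> liminf (\<lambda>n. ereal (root n (P_na n \<alpha> (event_B n (\<epsilon> * real n)))))"
      unfolding g_def by (rule Liminf_mono) (use monoev[OF e, of r] in \<open>auto elim: eventually_mono\<close>)
    also have "\<dots> \<le> k \<epsilon>" unfolding k_def by (rule Liminf_le_Limsup) simp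
    finally show ?thesis .
  qed
  have explim: "((\<lambda>\<epsilon>. ereal (exp (2 * \<alpha> * \<epsilon>) * l)) \<longlongrightarrow> ereal l) (at_right 0)"
  proof -
    have "((\<lambda>\<epsilon>. exp (2 * \<alpha> * \<epsilon>) * l) \<longlongrightarrow> exp (2 * \<alpha> * 0) * l) (at_right 0)"
      by (intro tendsto_mult tendsto_exp tendsto_const tendsto_ident_at)
    then show ?thesis by simp
  qed
  have hlimA: "((\<lambda>r. ereal (A * hr \<alpha> r)) \<longlongrightarrow> ereal l) at_top"
    unfolding l_def by (intro tendsto_ereal tendsto_mult tendsto_const hlim_tendsto[OF a])
  have gup: "g r \<le> ereal l" for r
  proof (rule tendsto_lowerbound[OF explim])
    show "eventually (\<lambda>\<epsilon>. g r \<le> ereal (exp (2 * \<alpha> * \<epsilon>) * l)) (at_right 0)"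
      using eventually_at_right_less[of "0::real"]
    proof eventually_elim
      fix \<epsilon> :: real assume e: "0 < \<epsilon>"
      show "g r \<le> ereal (exp (2 * \<alpha> * \<epsilon>) * l)"
        using order_trans[OF gk[OF e, of r] kup[of \<epsilon>]] e by simp
    qed
  qed simp
  have klow: "ereal l \<le> k \<epsilon>" if e: "\<epsilon> > 0" for \<epsilon>
  proof (rule tendsto_upperbound[OF hlimA])
    show "eventually (\<lambda>r. ereal (A * hr \<alpha> r) \<le> k \<epsilon>) at_top"
      unfolding eventually_at_top_linorder
      using glow gk[OF e] by (intro exI[of _ 1]) (auto intro: order_trans)
  qed simp
  have part2: "(g \<longlongrightarrow> ereal l) at_top"
  proof (rule tendsto_sandwich[OF _ _ hlimA tendsto_const])
    show "eventually (\<lambda>r. ereal (A * hr \<alpha> r) \<le> g r) at_top"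
      unfolding eventually_at_top_linorder using glow by (intro exI[of _ 1]) auto
    show "eventually (\<lambda>r. g r \<le> ereal l) at_top" using gup by simp
  qed
  have part3: "(k \<longlongrightarrow> ereal l) (at_right 0)"
  proof (rule tendsto_sandwich[OF _ _ tendsto_const explim])
    show "eventually (\<lambda>\<epsilon>. ereal l \<le> k \<epsilon>) (at_right 0)"
      using eventually_at_right_less[of "0::real"] by eventually_elim (use klow in auto)
    show "eventually (\<lambda>\<epsilon>. k \<epsilon> \<le> ereal (exp (2 * \<alpha> * \<epsilon>) * l)) (at_right 0)"
      using eventually_at_right_less[of "0::real"] by eventually_elim (use kup in auto)
  qed
  show ?thesis
    using limL part2 part3 unfolding g_def k_def by blast
qed

lemma P_zero: "P_na n 0 Q = (if Q {} then 1 else 0)"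
proof -
  define S where "S = {E. E \<subseteq> all_pairs n \<and> Q E}"
  have finS: "finite S" unfolding S_def using all_pairs_finite by simp
  have "P_na n 0 Q = (\<Sum>E\<in>S. 0 ^ card E * (1 - 0) ^ (card (all_pairs n) - card E))"
    unfolding P_na_def Gnp_prob_def S_def by simp
  also have "\<dots> = (\<Sum>E\<in>S. if E = {} then 1 else 0)"
  proof (rule sum.cong[OF refl])
    fix E assume "E \<in> S"
    then have "finite E" unfolding S_def using all_pairs_finite finite_subset by blast
    then show "(0::real) ^ card E * (1 - 0) ^ (card (all_pairs n) - card E) = (if E = {} then 1 else 0)"
      by (cases "E = {}") auto
  qed
  also have "\<dots> = (if {} \<in> S then 1 else 0)" using finS by (simp add: sum.delta)
  finally show ?thesis unfolding S_def by simp
qed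

lemma eventB_empty:
  assumes "n \<ge> 1"
  shows "event_B n r {} \<longleftrightarrow> r \<ge> 1"
proof -
  have "component n {} v = {v}" if "v \<in> {1..n}" for v
    using reach_empty[of v] that unfolding component_def reach_def by auto
  then have "event_B n r {} \<longleftrightarrow> (\<forall>v\<in>{1..n}. 1 \<le> r)" unfolding event_B_def by simp
  moreover have "1 \<in> {1..n}" using assms by simp
  ultimately show ?thesis by blast
qed

lemma main_zero:
  shows "\<exists>l :: real.
     ((\<lambda>n. root n (P_na n 0 event_L)) \<longlonglongrightarrow> l) \<and>
     ((\<lambda>r::real. liminf (\<lambda>n. ereal (root n (P_na n 0 (event_B n r)))))
        \<longlongrightarrow> ereal l) at_top \<and>
     ((\<lambda>\<epsilon>::real. limsup (\<lambda>n. ereal (root n (P_na n 0 (event_B n (\<epsilon> * real n))))))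
        \<longlongrightarrow> ereal l) (at_right 0)"
proof (intro exI[of _ 1] conjI)
  have L: "P_na n 0 event_L = 1" for n unfolding P_zero event_L_def using no_cycle_empty by simp
  show "(\<lambda>n. root n (P_na n 0 event_L)) \<longlonglongrightarrow> 1"
    unfolding L by (rule tendsto_eventually) (auto simp: eventually_sequentially intro!: exI[of _ 1])
  have g1: "liminf (\<lambda>n. ereal (root n (P_na n 0 (event_B n r)))) = ereal 1" if r: "r \<ge> 1" for r
  proof (rule lim_imp_Liminf)
    show "((\<lambda>n. ereal (root n (P_na n 0 (event_B n r)))) \<longlongrightarrow> ereal 1) sequentially"
    proof (rule tendsto_eventually)
      show "eventually (\<lambda>n. ereal (root n (P_na n 0 (event_B n r))) = ereal 1) sequentially"
        unfolding eventually_sequentially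
        using r by (intro exI[of _ 1]) (auto simp: P_zero eventB_empty)
    qed
  qed simp
  show "((\<lambda>r::real. liminf (\<lambda>n. ereal (root n (P_na n 0 (event_B n r))))) \<longlongrightarrow> ereal 1) at_top"
    by (rule tendsto_eventually) (use g1 in \<open>auto simp: eventually_at_top_linorder intro!: exI[of _ 1]\<close>)
  have k1: "limsup (\<lambda>n. ereal (root n (P_na n 0 (event_B n (\<epsilon> * real n))))) = ereal 1"
    if e: "\<epsilon> > 0" for \<epsilon>
  proof (rule lim_imp_Limsup)
    obtain N :: nat where N: "real N > 1 / \<epsilon>" using reals_Archimedean2 by blast
    show "((\<lambda>n. ereal (root n (P_na n 0 (event_B n (\<epsilon> * real n))))) \<longlongrightarrow> ereal 1) sequentially"
    proof (rule tendsto_eventually)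
      show "eventually (\<lambda>n. ereal (root n (P_na n 0 (event_B n (\<epsilon> * real n)))) = ereal 1) sequentially"
        unfolding eventually_sequentially
      proof (intro exI[of _ "max N 1"] allI impI)
        fix n assume n: "n \<ge> max N 1"
        then have "real n > 1 / \<epsilon>" using N by linarith
        then have "\<epsilon> * real n \<ge> 1" using e by (simp add: divide_less_eq mult.commute)
        then show "ereal (root n (P_na n 0 (event_B n (\<epsilon> * real n)))) = ereal 1"
          using n by (simp add: P_zero eventB_empty)
      qed
    qed
  qed simp
  show "((\<lambda>\<epsilon>::real. limsup (\<lambda>n. ereal (root n (P_na n 0 (event_B n (\<epsilon> * real n)))))) \<longlongrightarrow> ereal 1) (at_right 0)"
  proof (rule tendsto_eventually)
    show "eventually (\<lambda>\<epsilon>. limsup (\<lambda>n. ereal (root n (P_na n 0 (event_B n (\<epsilon> * real n))))) = ereal 1) (at_right 0)"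
      using eventually_at_right_less[of "0::real"] by eventually_elim (use k1 in auto)
  qed
qed

theorem theorem2p4:
  fixes \<alpha> :: real
  assumes "\<alpha> \<ge> 0"
  shows "\<exists>l :: real.
     ((\<lambda>n. root n (P_na n \<alpha> event_L)) \<longlonglongrightarrow> l) \<and>
     ((\<lambda>r::real. liminf (\<lambda>n. ereal (root n (P_na n \<alpha> (event_B n r)))))
        \<longlongrightarrow> ereal l) at_top \<and>
     ((\<lambda>\<epsilon>::real. limsup (\<lambda>n. ereal (root n (P_na n \<alpha> (event_B n (\<epsilon> * real n))))))
        \<longlongrightarrow> ereal l) (at_right 0)"
proof (cases "\<alpha> = 0")
  case True
  then show ?thesis using main_zero by simp
next
  case False
  then have "\<alpha> > 0" using assms by simp
  then show ?thesis by (rule main_pos)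
qed

end
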